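(* Let $1\le k<N/2$ and $l\ge 1$. Consider the problem of identifying an unknown $x\in\{0,1\}^N$ with $wt(x)=k$ using the balance oracle, under the restriction that every query string (in every superposition) places at least $l$ coins on the pans. Then every quantum algorithm that identifies $x$ with bounded error needs $\Omega((lk/N)^{1/4})$ queries. In particular, if there is a constant $c$ such that at least $N/c$ coins must be placed on the pans in every query, then $\Omega(k^{1/4})$ queries are necessary.
   Context: Counterfeit coin model: $x\in\{0,1\}^N$, $x_i=1$ meaning coin $i$ is false; $k=wt(x)$ (Hamming weight) is known and $k<N/2$. For $l'\le\lfloor N/2\rfloor$, $Q_{l'}$ is the set of $q\in\{0,1,-1\}^N$ with exactly $l'$ entries $1$ and $l'$ entries $-1$ ($1$: left pan, $-1$: right pan, $0$: not weighed). For such $q$, $\chi(x;q)=0$ if $\sum_iq_ix_i=0$ (balanced) and $1$ otherwise (tilted). The balance oracle is the unitary $|q\rangle\mapsto(-1)^{\chi(x;q)}|q\rangle$ (equivalently $|q,a\rangle\mapsto|q,a\oplus\chi(x;q)\rangle$). The restriction "at least $l$ coins placed on the pans" means only query strings $q$ with at least $l$ nonzero entries may be queried. Bounded error: the output equals $x$ with probability at least a fixed constant $>1/2$ (e.g. $2/3$) for every admissible $x$. *)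

theory Defs
  imports Complex_Main
begin

text \<open>Coins are indexed by 0..N-1. An unknown string x in {0,1}^N is represented by the
set of its 1-positions (the false coins), a subset of {..<N}. A query string
q in {0,1,-1}^N is a function nat => int vanishing outside {..<N}.\<close>

type_synonym qstring = "nat \<Rightarrow> int"
type_synonym basis = "qstring \<times> nat"   \<comment> \<open>query register, workspace register\<close>
type_synonym qstate = "basis \<Rightarrow> complex"
type_synonym qop = "basis \<Rightarrow> basis \<Rightarrow> complex"  \<comment> \<open>matrix entries U b a\<close>

definition query_string :: "nat \<Rightarrow> nat \<Rightarrow> qstring \<Rightarrow> bool" where
  "query_string N l' q \<longleftrightarrow>
     (\<forall>i. q i \<in> {-1, 0, 1}) \<and> (\<forall>i. N \<le> i \<longrightarrow> q i = 0) \<and> l' \<le> N div 2 \<and>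
     card {i. q i = 1} = l' \<and> card {i. q i = -1} = l'"

definition admissible_queries :: "nat \<Rightarrow> nat \<Rightarrow> qstring set" where
  "admissible_queries N l = {q. (\<exists>l'. query_string N l' q) \<and> l \<le> card {i. q i \<noteq> 0}}"

definition tilted :: "nat \<Rightarrow> nat set \<Rightarrow> qstring \<Rightarrow> bool" where
  "tilted N x q \<longleftrightarrow> (\<Sum>i<N. q i * (if i \<in> x then 1 else 0)) \<noteq> 0"

definition basis_set :: "nat \<Rightarrow> nat \<Rightarrow> nat \<Rightarrow> basis set" where
  "basis_set N l m = admissible_queries N l \<times> {..<m}"

definition balance_orcl :: "nat \<Rightarrow> nat set \<Rightarrow> qstate \<Rightarrow> qstate" where
  "balance_orcl N x \<psi> = (\<lambda>(q, w). (if tilted N x q then -1 else 1) * \<psi> (q, w))"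

definition unitary_on :: "basis set \<Rightarrow> qop \<Rightarrow> bool" where
  "unitary_on B U \<longleftrightarrow>
     (\<forall>a\<in>B. \<forall>a'\<in>B. (\<Sum>b\<in>B. cnj (U b a) * U b a') = (if a = a' then 1 else 0))"

definition apply_op :: "basis set \<Rightarrow> qop \<Rightarrow> qstate \<Rightarrow> qstate" where
  "apply_op B U \<psi> = (\<lambda>b. if b \<in> B then (\<Sum>a\<in>B. U b a * \<psi> a) else 0)"

fun run :: "basis set \<Rightarrow> nat \<Rightarrow> nat set \<Rightarrow> qstate \<Rightarrow> qop list \<Rightarrow> qstate" where
  "run B N x \<psi> [] = \<psi>"
| "run B N x \<psi> (U # Us) = run B N x (apply_op B U (balance_orcl N x \<psi>)) Us"

text \<open>Final state U_T O_x ... U_1 O_x U_0 psi0; the number of queries is length Us.\<close>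
definition final_state :: "nat \<Rightarrow> nat \<Rightarrow> nat \<Rightarrow> nat set \<Rightarrow> qstate \<Rightarrow> qop \<Rightarrow> qop list \<Rightarrow> qstate" where
  "final_state N l m x \<psi>0 U0 Us =
     run (basis_set N l m) N x (apply_op (basis_set N l m) U0 \<psi>0) Us"

definition success_prob :: "nat \<Rightarrow> nat \<Rightarrow> nat \<Rightarrow> nat set \<Rightarrow> qstate \<Rightarrow> qop \<Rightarrow> qop list
    \<Rightarrow> (basis \<Rightarrow> nat set) \<Rightarrow> real" where
  "success_prob N l m x \<psi>0 U0 Us out =
     (\<Sum>b\<in>{b\<in>basis_set N l m. out b = x}. (cmod (final_state N l m x \<psi>0 U0 Us b))\<^sup>2)"

definition identifies :: "nat \<Rightarrow> nat \<Rightarrow> nat \<Rightarrow> nat \<Rightarrow> qstate \<Rightarrow> qop \<Rightarrow> qop list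
    \<Rightarrow> (basis \<Rightarrow> nat set) \<Rightarrow> bool" where
  "identifies N k l m \<psi>0 U0 Us out \<longleftrightarrow>
     (\<Sum>b\<in>basis_set N l m. (cmod (\<psi>0 b))\<^sup>2) = 1 \<and>
     unitary_on (basis_set N l m) U0 \<and> (\<forall>U\<in>set Us. unitary_on (basis_set N l m) U) \<and>
     (\<forall>x. x \<subseteq> {..<N} \<and> card x = k \<longrightarrow> success_prob N l m x \<psi>0 U0 Us out \<ge> 2/3)"

end

theory Submission
  imports Defs "HOL-Analysis.L2_Norm"
begin



definition nm :: "basis set \<Rightarrow> qstate \<Rightarrow> real" where
  "nm B \<psi> = L2_set (\<lambda>b. cmod (\<psi> b)) B"

lemma nm_sq: "(nm B \<psi>)\<^sup>2 = (\<Sum>b\<in>B. (cmod (\<psi> b))\<^sup>2)"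
  unfolding nm_def L2_set_def by (simp add: sum_nonneg)

lemma nm_nonneg: "0 \<le> nm B \<psi>" unfolding nm_def by simp

lemma nm_triangle: "nm B (\<lambda>b. f b + g b) \<le> nm B f + nm B g"
proof -
  have "nm B (\<lambda>b. f b + g b) \<le> L2_set (\<lambda>b. cmod (f b) + cmod (g b)) B"
    unfolding nm_def by (rule L2_set_mono) (auto simp: norm_triangle_ineq)
  also have "\<dots> \<le> nm B f + nm B g" unfolding nm_def by (rule L2_set_triangle_ineq)
  finally show ?thesis .
qed

lemma nm_eqI: "(\<Sum>b\<in>B. (cmod (f b))\<^sup>2) = (\<Sum>b\<in>B. (cmod (g b))\<^sup>2) \<Longrightarrow> nm B f = nm B g"
  unfolding nm_def L2_set_def by simp

lemma apply_op_sq: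
  assumes fin: "finite B" and U: "unitary_on B U"
  shows "(\<Sum>b\<in>B. (cmod (apply_op B U \<psi> b))\<^sup>2) = (\<Sum>a\<in>B. (cmod (\<psi> a))\<^sup>2)"
proof -
  have "complex_of_real (\<Sum>b\<in>B. (cmod (apply_op B U \<psi> b))\<^sup>2)
      = (\<Sum>b\<in>B. (\<Sum>a\<in>B. U b a * \<psi> a) * cnj (\<Sum>a'\<in>B. U b a' * \<psi> a'))"
    unfolding of_real_sum by (intro sum.cong refl, subst complex_norm_square, simp add: apply_op_def)
  also have "\<dots> = (\<Sum>b\<in>B. \<Sum>a\<in>B. \<Sum>a'\<in>B. \<psi> a * cnj (\<psi> a') * (cnj (U b a') * U b a))"
    apply (simp add: sum_distrib_left sum_distrib_right mult_ac)
    apply (rule sum.cong[OF refl])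
    apply (rule sum.swap)
    done
  also have "\<dots> = (\<Sum>a\<in>B. \<Sum>a'\<in>B. \<Sum>b\<in>B. \<psi> a * cnj (\<psi> a') * (cnj (U b a') * U b a))"
    apply (rule trans[OF sum.swap])
    apply (rule sum.cong[OF refl])
    apply (rule sum.swap)
    done
  also have "\<dots> = (\<Sum>a\<in>B. \<Sum>a'\<in>B. \<psi> a * cnj (\<psi> a') * (if a' = a then 1 else 0))"
  proof (intro sum.cong refl)
    fix a a' assume "a \<in> B" "a' \<in> B"
    then have "(\<Sum>b\<in>B. cnj (U b a') * U b a) = (if a' = a then 1 else 0)"
      using U unfolding unitary_on_def by blast
    then show "(\<Sum>b\<in>B. \<psi> a * cnj (\<psi> a') * (cnj (U b a') * U b a)) = \<psi> a * cnj (\<psi> a') * (if a' = a then 1 else 0)"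
      by (simp add: sum_distrib_left[symmetric])
  qed
  also have "\<dots> = (\<Sum>a\<in>B. \<psi> a * cnj (\<psi> a))"
    using fin by (simp add: if_distrib cong: if_cong)
  also have "\<dots> = complex_of_real (\<Sum>a\<in>B. (cmod (\<psi> a))\<^sup>2)"
    unfolding of_real_sum by (intro sum.cong refl, subst complex_norm_square, simp)
  finally show ?thesis using of_real_eq_iff by blast
qed

lemma apply_op_diff:
  "apply_op B U \<psi> b - apply_op B U \<phi> b = apply_op B U (\<lambda>a. \<psi> a - \<phi> a) b"
  by (simp add: apply_op_def sum_subtractf right_diff_distrib)

lemma apply_op_neg: "apply_op B U (\<lambda>a. - \<psi> a) b = - apply_op B U \<psi> b"
  by (simp add: apply_op_def sum_negf)

lemma orcl_eq: "balance_orcl N x \<psi> b = (if tilted N x (fst b) then -1 else 1) * \<psi> b"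
  by (cases b) (simp add: balance_orcl_def)

lemma nm_apply_op:
  "finite B \<Longrightarrow> unitary_on B U \<Longrightarrow> nm B (apply_op B U \<psi>) = nm B \<psi>"
  by (rule nm_eqI) (rule apply_op_sq)

fun crun :: "basis set \<Rightarrow> qstate \<Rightarrow> qop list \<Rightarrow> qstate" where
  "crun B \<psi> [] = \<psi>"
| "crun B \<psi> (U # Us) = crun B (apply_op B U (\<lambda>b. - \<psi> b)) Us"

fun hsum :: "basis set \<Rightarrow> nat \<Rightarrow> nat set \<Rightarrow> qstate \<Rightarrow> qop list \<Rightarrow> real" where
  "hsum B N x \<phi> [] = 0"
| "hsum B N x \<phi> (U # Us) = nm B (\<lambda>b. balance_orcl N x \<phi> b + \<phi> b)
      + hsum B N x (apply_op B U (\<lambda>b. - \<phi> b)) Us"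

lemma hybrid:
  assumes "finite B" "\<forall>U\<in>set Us. unitary_on B U"
  shows "nm B (\<lambda>b. run B N x \<psi> Us b - crun B \<phi> Us b) \<le> nm B (\<lambda>b. \<psi> b - \<phi> b) + hsum B N x \<phi> Us"
  using assms(2)
proof (induction Us arbitrary: \<psi> \<phi>)
  case Nil
  then show ?case by simp
next
  case (Cons U Us)
  let ?p = "apply_op B U (balance_orcl N x \<psi>)"
  let ?f = "apply_op B U (\<lambda>b. - \<phi> b)"
  have U: "unitary_on B U" using Cons.prems by simp
  have "nm B (\<lambda>b. run B N x \<psi> (U#Us) b - crun B \<phi> (U#Us) b)
      = nm B (\<lambda>b. run B N x ?p Us b - crun B ?f Us b)" by simp
  also have "\<dots> \<le> nm B (\<lambda>b. ?p b - ?f b) + hsum B N x ?f Us"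
    using Cons by simp
  also have "nm B (\<lambda>b. ?p b - ?f b) = nm B (\<lambda>b. balance_orcl N x \<psi> b + \<phi> b)"
    using nm_apply_op[OF assms(1) U] by (simp add: apply_op_diff)
  also have "(\<lambda>b. balance_orcl N x \<psi> b + \<phi> b)
     = (\<lambda>b. balance_orcl N x (\<lambda>a. \<psi> a - \<phi> a) b + (balance_orcl N x \<phi> b + \<phi> b))"
    by (auto simp: orcl_eq algebra_simps)
  also have "nm B \<dots> \<le> nm B (balance_orcl N x (\<lambda>a. \<psi> a - \<phi> a)) + nm B (\<lambda>b. balance_orcl N x \<phi> b + \<phi> b)"
    by (rule nm_triangle)
  also have "nm B (balance_orcl N x (\<lambda>a. \<psi> a - \<phi> a)) = nm B (\<lambda>b. \<psi> b - \<phi> b)"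
    by (rule nm_eqI, rule sum.cong, simp, simp add: orcl_eq norm_mult)
  finally show ?case by (simp add: add.assoc)
qed

lemma sum_le_sqrt_card:
  assumes "finite X" "\<And>x. x \<in> X \<Longrightarrow> 0 \<le> a x"
  shows "(\<Sum>x\<in>X. a x) \<le> sqrt (real (card X) * (\<Sum>x\<in>X. (a x)\<^sup>2))"
proof -
  have "(\<Sum>x\<in>X. \<bar>a x\<bar> * \<bar>1::real\<bar>) \<le> L2_set a X * L2_set (\<lambda>_. 1) X"
    by (rule L2_set_mult_ineq)
  moreover have "(\<Sum>x\<in>X. \<bar>a x\<bar> * \<bar>1::real\<bar>) = (\<Sum>x\<in>X. a x)"
    using assms by simp
  moreover have "L2_set a X * L2_set (\<lambda>_. 1) X = sqrt (real (card X) * (\<Sum>x\<in>X. (a x)\<^sup>2))"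
    by (simp add: L2_set_constant L2_set_def real_sqrt_mult)
  ultimately show ?thesis by (simp add: mult.commute)
qed

lemma nm_orcl_sq:
  "(nm B (\<lambda>b. balance_orcl N x \<phi> b + \<phi> b))\<^sup>2
     = (\<Sum>b\<in>B. if tilted N x (fst b) then 0 else 4 * (cmod (\<phi> b))\<^sup>2)"
  unfolding nm_sq
proof (intro sum.cong refl)
  fix b
  show "(cmod (balance_orcl N x \<phi> b + \<phi> b))\<^sup>2 = (if tilted N x (fst b) then 0 else 4 * (cmod (\<phi> b))\<^sup>2)"
  proof (cases "tilted N x (fst b)")
    case True then show ?thesis by (simp add: orcl_eq)
  next
    case False
    then have "balance_orcl N x \<phi> b + \<phi> b = 2 * \<phi> b" by (simp add: orcl_eq)
    then show ?thesis using False by (simp add: norm_mult power_mult_distrib)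
  qed
qed

lemma sum_if_zero_card:
  "finite X \<Longrightarrow> (\<Sum>x\<in>X. if P x then 0 else (c::real)) = c * real (card {x\<in>X. \<not> P x})"
proof -
  assume "finite X"
  then have "(\<Sum>x\<in>{x\<in>X. \<not> P x}. c) = (\<Sum>x\<in>X. if \<not> P x then c else 0)"
    by (rule sum.inter_filter)
  moreover have "(\<Sum>x\<in>X. if P x then 0 else c) = (\<Sum>x\<in>X. if \<not> P x then c else 0)"
    by (rule sum.cong) auto
  ultimately show ?thesis by (simp add: mult.commute)
qed

lemma crun_sq:
  assumes "finite B" "\<forall>U\<in>set Us. unitary_on B U"
  shows "(\<Sum>b\<in>B. (cmod (crun B \<phi> Us b))\<^sup>2) = (\<Sum>b\<in>B. (cmod (\<phi> b))\<^sup>2)"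
  using assms(2)
proof (induction Us arbitrary: \<phi>)
  case Nil then show ?case by simp
next
  case (Cons U Us)
  then have "(\<Sum>b\<in>B. (cmod (crun B \<phi> (U#Us) b))\<^sup>2)
      = (\<Sum>b\<in>B. (cmod (apply_op B U (\<lambda>b. - \<phi> b) b))\<^sup>2)" by simp
  also have "\<dots> = (\<Sum>b\<in>B. (cmod (- \<phi> b))\<^sup>2)"
    using apply_op_sq[OF assms(1)] Cons.prems by simp
  finally show ?case by simp
qed

lemma hsum_bound:
  assumes B: "finite B" and X: "finite X" and Us: "\<forall>U\<in>set Us. unitary_on B U"
    and \<phi>: "(\<Sum>b\<in>B. (cmod (\<phi> b))\<^sup>2) = 1" and e: "0 \<le> \<epsilon>"
    and bal: "\<forall>b\<in>B. real (card {x\<in>X. \<not> tilted N x (fst b)}) \<le> \<epsilon> * real (card X)"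
  shows "(\<Sum>x\<in>X. hsum B N x \<phi> Us) \<le> real (card X) * (2 * sqrt \<epsilon>) * real (length Us)"
  using Us \<phi>
proof (induction Us arbitrary: \<phi>)
  case Nil then show ?case by simp
next
  case (Cons U Us)
  let ?n = "real (card X)"
  let ?f = "apply_op B U (\<lambda>b. - \<phi> b)"
  have f1: "(\<Sum>b\<in>B. (cmod (?f b))\<^sup>2) = 1"
    using apply_op_sq[OF B] Cons.prems by simp
  have IH: "(\<Sum>x\<in>X. hsum B N x ?f Us) \<le> ?n * (2 * sqrt \<epsilon>) * real (length Us)"
    using Cons f1 by simp
  have "(\<Sum>x\<in>X. (nm B (\<lambda>b. balance_orcl N x \<phi> b + \<phi> b))\<^sup>2)
      = (\<Sum>x\<in>X. \<Sum>b\<in>B. if tilted N x (fst b) then 0 else 4 * (cmod (\<phi> b))\<^sup>2)"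
    by (simp add: nm_orcl_sq)
  also have "\<dots> = (\<Sum>b\<in>B. \<Sum>x\<in>X. if tilted N x (fst b) then 0 else 4 * (cmod (\<phi> b))\<^sup>2)"
    by (rule sum.swap)
  also have "\<dots> = (\<Sum>b\<in>B. 4 * (cmod (\<phi> b))\<^sup>2 * real (card {x\<in>X. \<not> tilted N x (fst b)}))"
    using X by (simp add: sum_if_zero_card)
  also have "\<dots> \<le> (\<Sum>b\<in>B. 4 * (cmod (\<phi> b))\<^sup>2 * (\<epsilon> * ?n))"
    using bal by (intro sum_mono mult_left_mono) auto
  also have "\<dots> = (4 * \<epsilon> * ?n) * (\<Sum>b\<in>B. (cmod (\<phi> b))\<^sup>2)"
    by (simp add: sum_distrib_left mult_ac)
  also have "\<dots> = 4 * \<epsilon> * ?n"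
    using Cons.prems(2) by simp
  finally have sq: "(\<Sum>x\<in>X. (nm B (\<lambda>b. balance_orcl N x \<phi> b + \<phi> b))\<^sup>2) \<le> 4 * \<epsilon> * ?n" .
  have "(\<Sum>x\<in>X. nm B (\<lambda>b. balance_orcl N x \<phi> b + \<phi> b))
      \<le> sqrt (?n * (\<Sum>x\<in>X. (nm B (\<lambda>b. balance_orcl N x \<phi> b + \<phi> b))\<^sup>2))"
    using X by (intro sum_le_sqrt_card) (auto simp: nm_nonneg)
  also have "\<dots> \<le> sqrt (?n * (4 * \<epsilon> * ?n))"
    using sq by (intro real_sqrt_le_mono mult_left_mono) auto
  also have "\<dots> = ?n * (2 * sqrt \<epsilon>)"
    using e by (simp add: real_sqrt_mult mult_ac)
  finally have st: "(\<Sum>x\<in>X. nm B (\<lambda>b. balance_orcl N x \<phi> b + \<phi> b)) \<le> ?n * (2 * sqrt \<epsilon>)" .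
  show ?case using st IH by (simp add: sum.distrib algebra_simps)
qed

lemma finite_adm: "finite (admissible_queries N l)"
proof -
  let ?A = "{q::qstring. (\<forall>i. q i \<in> {-1,0,1}) \<and> (\<forall>i. N \<le> i \<longrightarrow> q i = 0)}"
  have sub: "admissible_queries N l \<subseteq> ?A"
    unfolding admissible_queries_def query_string_def by blast
  have inj: "inj_on (\<lambda>q. map q [0..<N]) ?A"
  proof (rule inj_onI)
    fix q q' assume q: "q \<in> ?A" and q': "q' \<in> ?A" and eq: "map q [0..<N] = map q' [0..<N]"
    show "q = q'"
    proof
      fix i show "q i = q' i"
      proof (cases "i < N")
        case True
        then have "map q [0..<N] ! i = map q' [0..<N] ! i" using eq by simp
        then show ?thesis using True by simp
      next
        case False then show ?thesis using q q' by simp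
      qed
    qed
  qed
  have "(\<lambda>q. map q [0..<N]) ` ?A \<subseteq> {xs. set xs \<subseteq> {-1,0,1} \<and> length xs = N}"
  proof (rule image_subsetI)
    fix q assume "q \<in> ?A"
    then have "\<forall>i. q i \<in> {-1,0,1}" by blast
    then have "set (map q [0..<N]) \<subseteq> {-1,0,1}" by (simp add: image_subset_iff)
    then show "map q [0..<N] \<in> {xs. set xs \<subseteq> {-1,0,1} \<and> length xs = N}" by simp
  qed
  moreover have "finite {xs :: int list. set xs \<subseteq> {-1,0,1} \<and> length xs = N}"
    by (rule finite_lists_length_eq) simp
  ultimately have "finite ?A" by (rule inj_on_finite[OF inj])
  then show ?thesis using sub finite_subset by blast
qed

lemma L2_set_subset:
  "finite A \<Longrightarrow> S \<subseteq> A \<Longrightarrow> L2_set f S \<le> L2_set f A"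
  unfolding L2_set_def by (intro real_sqrt_le_mono sum_mono2) auto

lemma quantum_lb:
  assumes idf: "identifies N k l m \<psi>0 U0 Us out"
    and Xd: "X = {x. x \<subseteq> {..<N} \<and> card x = k}"
    and n3: "3 \<le> card X" and e: "0 \<le> \<epsilon>"
    and bal: "\<forall>q\<in>admissible_queries N l. real (card {x\<in>X. \<not> tilted N x q}) \<le> \<epsilon> * real (card X)"
  shows "sqrt (2/3) - sqrt (1/3) \<le> 2 * real (length Us) * sqrt \<epsilon>"
proof -
  define B where "B = basis_set N l m"
  have finB: "finite B" unfolding B_def basis_set_def using finite_adm by simp
  have finX: "finite X" unfolding Xd by (rule finite_subset[of _ "Pow {..<N}"]) auto
  let ?n = "real (card X)"
  have npos: "?n \<ge> 3" using n3 by simp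
  have psi0: "(\<Sum>b\<in>B. (cmod (\<psi>0 b))\<^sup>2) = 1" and U0: "unitary_on B U0"
    and Us: "\<forall>U\<in>set Us. unitary_on B U"
    using idf unfolding identifies_def B_def by (simp_all add: identifies_def B_def)
  define \<phi>0 where "\<phi>0 = apply_op B U0 \<psi>0"
  define \<phi>T where "\<phi>T = crun B \<phi>0 Us"
  have phi0: "(\<Sum>b\<in>B. (cmod (\<phi>0 b))\<^sup>2) = 1"
    unfolding \<phi>0_def using apply_op_sq[OF finB U0] psi0 by simp
  have phiT: "(\<Sum>b\<in>B. (cmod (\<phi>T b))\<^sup>2) = 1"
    unfolding \<phi>T_def using crun_sq[OF finB Us] phi0 by simp
  have balB: "\<forall>b\<in>B. real (card {x\<in>X. \<not> tilted N x (fst b)}) \<le> \<epsilon> * ?n"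
    using bal unfolding B_def basis_set_def by auto
  define p where "p x = (\<Sum>b\<in>{b\<in>B. out b = x}. (cmod (\<phi>T b))\<^sup>2)" for x
  have key: "sqrt (2/3) \<le> sqrt (p x) + hsum B N x \<phi>0 Us" if xX: "x \<in> X" for x
  proof -
    let ?S = "{b\<in>B. out b = x}"
    let ?F = "final_state N l m x \<psi>0 U0 Us"
    have F: "?F = run B N x \<phi>0 Us" unfolding final_state_def B_def \<phi>0_def by simp
    have "2/3 \<le> success_prob N l m x \<psi>0 U0 Us out"
      using idf xX unfolding identifies_def Xd by blast
    then have "sqrt (2/3) \<le> sqrt (success_prob N l m x \<psi>0 U0 Us out)"
      by (rule real_sqrt_le_mono)
    also have "sqrt (success_prob N l m x \<psi>0 U0 Us out) = nm ?S ?F"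
      unfolding success_prob_def nm_def L2_set_def B_def by simp
    also have "nm ?S ?F = nm ?S (\<lambda>b. \<phi>T b + (?F b - \<phi>T b))" by simp
    also have "\<dots> \<le> nm ?S \<phi>T + nm ?S (\<lambda>b. ?F b - \<phi>T b)" by (rule nm_triangle)
    also have "nm ?S \<phi>T = sqrt (p x)" unfolding nm_def L2_set_def p_def by simp
    also have "nm ?S (\<lambda>b. ?F b - \<phi>T b) \<le> nm B (\<lambda>b. ?F b - \<phi>T b)"
      unfolding nm_def using finB by (intro L2_set_subset) auto
    also have "\<dots> \<le> nm B (\<lambda>b. \<phi>0 b - \<phi>0 b) + hsum B N x \<phi>0 Us"
      unfolding F \<phi>T_def by (rule hybrid[OF finB Us])
    also have "nm B (\<lambda>b. \<phi>0 b - \<phi>0 b) = 0" unfolding nm_def by (simp add: L2_set_def)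
    finally show ?thesis by simp
  qed
  have sump: "(\<Sum>x\<in>X. p x) \<le> 1"
  proof -
    let ?S = "{b\<in>B. out b \<in> X}"
    have "(\<Sum>x\<in>X. p x) = (\<Sum>x\<in>X. \<Sum>b\<in>{b\<in>?S. out b = x}. (cmod (\<phi>T b))\<^sup>2)"
      unfolding p_def by (intro sum.cong) auto
    also have "\<dots> = (\<Sum>b\<in>?S. (cmod (\<phi>T b))\<^sup>2)"
      using finB finX by (intro sum.group) auto
    also have "\<dots> \<le> (\<Sum>b\<in>B. (cmod (\<phi>T b))\<^sup>2)"
      using finB by (intro sum_mono2) auto
    finally show ?thesis using phiT by simp
  qed
  have s1: "?n * sqrt (2/3) \<le> (\<Sum>x\<in>X. sqrt (p x)) + (\<Sum>x\<in>X. hsum B N x \<phi>0 Us)"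
  proof -
    have "?n * sqrt (2/3) = (\<Sum>x\<in>X. sqrt (2/3))" by simp
    also have "\<dots> \<le> (\<Sum>x\<in>X. sqrt (p x) + hsum B N x \<phi>0 Us)"
      using key by (intro sum_mono) auto
    also have "\<dots> = (\<Sum>x\<in>X. sqrt (p x)) + (\<Sum>x\<in>X. hsum B N x \<phi>0 Us)"
      by (rule sum.distrib)
    finally show ?thesis .
  qed
  have s2: "(\<Sum>x\<in>X. sqrt (p x)) \<le> sqrt ?n"
  proof -
    have "(\<Sum>x\<in>X. sqrt (p x)) \<le> sqrt (?n * (\<Sum>x\<in>X. (sqrt (p x))\<^sup>2))"
      using finX by (intro sum_le_sqrt_card) (auto simp: p_def sum_nonneg)
    also have "(\<Sum>x\<in>X. (sqrt (p x))\<^sup>2) = (\<Sum>x\<in>X. p x)"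
      unfolding p_def by (intro sum.cong refl) (simp add: sum_nonneg)
    also have "sqrt (?n * (\<Sum>x\<in>X. p x)) \<le> sqrt ?n"
      using sump npos by (intro real_sqrt_le_mono) (simp add: mult_left_le)
    finally show ?thesis .
  qed
  have s3: "(\<Sum>x\<in>X. hsum B N x \<phi>0 Us) \<le> ?n * (2 * sqrt \<epsilon>) * real (length Us)"
    by (rule hsum_bound[OF finB finX Us phi0 e balB])
  have main: "?n * sqrt (2/3) \<le> sqrt ?n + ?n * (2 * sqrt \<epsilon>) * real (length Us)"
    using s1 s2 s3 by linarith
  have e1: "?n * sqrt (1/3) = sqrt (?n\<^sup>2 * (1/3))" by (subst real_sqrt_mult) simp
  have "3 * ?n \<le> ?n * ?n" using npos by (intro mult_right_mono) auto
  then have "sqrt ?n \<le> sqrt (?n\<^sup>2 * (1/3))" by (intro real_sqrt_le_mono) (simp add: power2_eq_square)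
  then have "sqrt ?n \<le> ?n * sqrt (1/3)" using e1 by simp
  then have "?n * sqrt (2/3) \<le> ?n * sqrt (1/3) + ?n * (2 * sqrt \<epsilon>) * real (length Us)"
    using main by linarith
  then have "?n * sqrt (2/3) \<le> ?n * (sqrt (1/3) + 2 * real (length Us) * sqrt \<epsilon>)"
    by (simp add: algebra_simps)
  then have "sqrt (2/3) \<le> sqrt (1/3) + 2 * real (length Us) * sqrt \<epsilon>"
    using npos by (simp add: mult_le_cancel_left_pos)
  then show ?thesis by simp
qed




declare binomial_Suc_Suc[simp del]

lemma cnt:
  assumes A: "finite A" and I: "I \<subseteq> A" and Ou: "Ou \<subseteq> A" and IO: "I \<inter> Ou = {}" and k: "card I \<le> k"
  shows "card {x. x \<subseteq> A \<and> card x = k \<and> I \<subseteq> x \<and> x \<inter> Ou = {}} = (card A - card I - card Ou) choose (k - card I)"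
proof -
  let ?S = "{x. x \<subseteq> A \<and> card x = k \<and> I \<subseteq> x \<and> x \<inter> Ou = {}}"
  let ?T = "{y. y \<subseteq> A - I - Ou \<and> card y = k - card I}"
  have fI: "finite I" using A I finite_subset by blast
  have fO: "finite Ou" using A Ou finite_subset by blast
  have "bij_betw (\<lambda>x. x - I) ?S ?T"
  proof (rule bij_betw_byWitness[where f'="\<lambda>y. y \<union> I"])
    show "\<forall>a\<in>?S. a - I \<union> I = a" by auto
    show "\<forall>a'\<in>?T. a' \<union> I - I = a'" by auto
    show "(\<lambda>x. x - I) ` ?S \<subseteq> ?T"
    proof
      fix y assume "y \<in> (\<lambda>x. x - I) ` ?S"
      then obtain x where x: "x \<in> ?S" and y: "y = x - I" by blast
      have "finite x" using x A finite_subset by blast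
      then have "card (x - I) = card x - card I" using x fI by (intro card_Diff_subset) auto
      then show "y \<in> ?T" using x y by auto
    qed
    show "(\<lambda>y. y \<union> I) ` ?T \<subseteq> ?S"
    proof
      fix x assume "x \<in> (\<lambda>y. y \<union> I) ` ?T"
      then obtain y where y: "y \<in> ?T" and x: "x = y \<union> I" by blast
      have "finite y" using y A finite_subset by blast
      then have "card (y \<union> I) = card y + card I" using y fI by (subst card_Un_disjoint) auto
      then show "x \<in> ?S" using x y k I IO by auto
    qed
  qed
  then have "card ?S = card ?T" by (rule bij_betw_same_card)
  also have "card ?T = card (A - I - Ou) choose (k - card I)"
    using A by (intro n_subsets) auto
  also have "card (A - I - Ou) = card A - card I - card Ou"
  proof -
    have "card (A - I - Ou) = card (A - I) - card Ou"
      using Ou IO A fO by (subst card_Diff_subset) auto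
    moreover have "card (A - I) = card A - card I" using A I fI by (simp add: card_Diff_subset)
    ultimately show ?thesis by simp
  qed
  finally show ?thesis .
qed

lemma cnt0:
  assumes A: "finite A" and k: "k < card I"
  shows "card {x. x \<subseteq> A \<and> card x = k \<and> I \<subseteq> x \<and> x \<inter> Ou = {}} = 0"
proof -
  have "{x. x \<subseteq> A \<and> card x = k \<and> I \<subseteq> x \<and> x \<inter> Ou = {}} = {}"
  proof (rule ccontr)
    assume "\<not> ?thesis"
    then obtain x where x: "x \<subseteq> A" "card x = k" "I \<subseteq> x" by blast
    then have "card I \<le> card x" using A by (meson card_mono finite_subset)
    then show False using x k by simp
  qed
  then show ?thesis by (metis card.empty)
qed

lemma ac_helper: "(j1::nat) * A = n2 * B \<Longrightarrow> t * B = n1 * C \<Longrightarrow> A * j1 * t = n2 * n1 * C"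
  by (metis mult.assoc mult.commute)

lemma choose_absorb2:
  assumes "j \<le> n"
  shows "((n+2) choose (j+1)) * (j+1) * (n+1-j) = (n+2) * (n+1) * (n choose j)"
proof -
  have e1: "Suc j * (Suc (Suc n) choose Suc j) = Suc (Suc n) * (Suc n choose j)"
    by (rule Suc_times_binomial)
  have e2: "(Suc n - j) * (Suc n choose j) = Suc n * ((Suc n - 1) choose j)"
    by (rule binomial_absorb_comp)
  have e1': "(j+1) * ((n+2) choose (j+1)) = (n+2) * ((n+1) choose j)" using e1 by simp
  have e2': "(n+1-j) * ((n+1) choose j) = (n+1) * (n choose j)" using e2 by simp
  show ?thesis using ac_helper[OF e1' e2'] .
qed

lemma cb_even: "(real ((2*n) choose n))\<^sup>2 * (2*real n+1) \<le> 16 ^ n"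
proof (induction n)
  case 0 then show ?case by simp
next
  case (Suc n)
  let ?c = "real ((2*n) choose n)" and ?d = "real ((2*n+2) choose (n+1))"
  have a1: "(n+1) * ((2*n+2) choose (n+1)) = (2*n+2) * ((2*n+1) choose n)"
    using Suc_times_binomial[of n "2*n+1"] by (simp add: mult_ac)
  have a2: "(n+1) * ((2*n+1) choose n) = (2*n+1) * ((2*n) choose n)"
    using binomial_absorb_comp[of "2*n+1" n] by (simp add: mult_ac Suc_diff_le)
  have r1: "real (n+1) * ?d = real (2*n+2) * real ((2*n+1) choose n)"
    using arg_cong[OF a1, of real] by (simp only: of_nat_mult)
  have r2: "real (n+1) * real ((2*n+1) choose n) = real (2*n+1) * ?c"
    using arg_cong[OF a2, of real] by (simp only: of_nat_mult)
  have "real (n+1) * ?d = 2 * (2*real n+1) * ?c"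
  proof -
    have "real (n+1) * ?d = 2 * (real (n+1) * real ((2*n+1) choose n))" using r1 by simp
    also have "\<dots> = 2 * (2*real n+1) * ?c" using r2 by simp
    finally show ?thesis .
  qed
  then have E2: "(real (n+1) * ?d)\<^sup>2 = (2 * (2*real n+1) * ?c)\<^sup>2" by simp
  have "(real (n+1))\<^sup>2 * (?d\<^sup>2 * (2*real n+3)) = (real (n+1) * ?d)\<^sup>2 * (2*real n+3)"
    by (simp add: power_mult_distrib)
  also have "\<dots> = (2 * (2*real n+1) * ?c)\<^sup>2 * (2*real n+3)" using E2 by simp
  also have "\<dots> = 4 * (2*real n+1) * (2*real n+3) * (?c\<^sup>2 * (2*real n+1))"
    by (simp add: power2_eq_square algebra_simps)
  also have "\<dots> \<le> 4 * (2*real n+1) * (2*real n+3) * 16 ^ n"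
    using Suc.IH by (intro mult_left_mono) auto
  also have "\<dots> \<le> (real (n+1))\<^sup>2 * 16 ^ Suc n"
  proof -
    have "4 * (2*real n+1) * (2*real n+3) \<le> (real (n+1))\<^sup>2 * 16"
      by (simp add: power2_eq_square algebra_simps)
    then have "4 * (2*real n+1) * (2*real n+3) * 16 ^ n \<le> (real (n+1))\<^sup>2 * 16 * 16 ^ n"
      by (intro mult_right_mono) auto
    then show ?thesis by simp
  qed
  finally show ?case
    by (simp add: mult_le_cancel_left_pos del: of_nat_add of_nat_Suc) (simp add: algebra_simps)
qed

lemma cb: "(real (m choose (m div 2)))\<^sup>2 * (m+1) \<le> 2 * 4 ^ m"
proof (cases "even m")
  case True
  then obtain n where m: "m = 2*n" by blast
  have "(real ((2*n) choose n))\<^sup>2 * (2*real n+1) \<le> 16 ^ n" by (rule cb_even)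
  moreover have "(4::real) ^ m = 16 ^ n" unfolding m by (simp add: power_mult)
  moreover have "(16::real) ^ n \<le> 2 * 16 ^ n" by simp
  moreover have "(real (m choose (m div 2)))\<^sup>2 * (m+1) = (real ((2*n) choose n))\<^sup>2 * (2*real n+1)"
    unfolding m by simp
  ultimately show ?thesis by linarith
next
  case False
  then obtain n where m: "m = 2*n+1" using oddE by blast
  have mdiv: "m div 2 = n" unfolding m by simp
  have a2: "(n+1) * ((2*n+1) choose n) = (2*n+1) * ((2*n) choose n)"
    using binomial_absorb_comp[of "2*n+1" n] by (simp add: mult_ac Suc_diff_le)
  let ?c = "real ((2*n) choose n)" and ?d = "real ((2*n+1) choose n)"
  have "real (n+1) * ?d = (2*real n+1) * ?c"
    using arg_cong[OF a2, of real] by (simp add: algebra_simps)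
  then have E2: "(real (n+1) * ?d)\<^sup>2 = ((2*real n+1) * ?c)\<^sup>2" by simp
  have "(real (n+1)) * ((real (n+1)) * (?d\<^sup>2 * (2*real n+2))) = 2 * (real (n+1) * ?d)\<^sup>2 * (real n+1)"
    by (simp add: power2_eq_square algebra_simps)
  also have "\<dots> = 2 * ((2*real n+1) * ?c)\<^sup>2 * (real n+1)" using E2 by simp
  also have "\<dots> = (real (n+1)) * (2 * (?c\<^sup>2 * (2*real n+1)) * (2*real n+1))"
    by (simp add: power2_eq_square algebra_simps)
  finally have "(real (n+1)) * (?d\<^sup>2 * (2*real n+2)) = 2 * (?c\<^sup>2 * (2*real n+1)) * (2*real n+1)"
    by (simp add: mult_left_cancel del: of_nat_add of_nat_Suc)
  also have "\<dots> \<le> 2 * 16 ^ n * (2*real n+1)"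
    using cb_even[of n] by (intro mult_right_mono) auto
  also have "\<dots> \<le> (real (n+1)) * (8 * 16 ^ n)"
    by (simp add: algebra_simps)
  finally have "?d\<^sup>2 * (2*real n+2) \<le> 8 * 16 ^ n"
    by (simp add: mult_le_cancel_left_pos del: of_nat_add of_nat_Suc)
  also have "(8::real) * 16 ^ n = 2 * 4 ^ m" unfolding m by (simp add: power_mult power_add)
  finally show ?thesis unfolding mdiv unfolding m by (simp add: algebra_simps)
qed




lemma sign_count:
  fixes d :: "'a \<Rightarrow> int"
  assumes fin: "finite L" and d: "\<forall>a\<in>L. d a \<in> {-1,0,1}"
  shows "real (card {\<sigma>. \<sigma> \<subseteq> L \<and> (\<Sum>a\<in>L. if a \<in> \<sigma> then - d a else d a) = c}) * 2 ^ card {a\<in>L. d a \<noteq> 0}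
         \<le> 2 ^ card L * real (card {a\<in>L. d a \<noteq> 0} choose (card {a\<in>L. d a \<noteq> 0} div 2))"
proof -
  define M where "M = {a\<in>L. d a \<noteq> 0}"
  define Z where "Z = L - M"
  define m where "m = card M"
  define Mp where "Mp = {a\<in>M. d a = 1}"
  define Mn where "Mn = {a\<in>M. d a = -1}"
  define h where "h \<tau> = (\<tau> \<inter> Mp) \<union> (Mn - \<tau>)" for \<tau>
  have MsubL: "M \<subseteq> L" unfolding M_def by auto
  have finM: "finite M" using fin MsubL finite_subset by blast
  have finZ: "finite Z" using fin unfolding Z_def by simp
  have Mpn: "M = Mp \<union> Mn" "Mp \<inter> Mn = {}" using d unfolding M_def Mp_def Mn_def by auto
  have hM: "h \<tau> \<subseteq> M" for \<tau> unfolding h_def using Mpn by auto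
  have sum_eq: "(\<Sum>a\<in>L. if a \<in> \<sigma> then - d a else d a) = int m - 2 * int (card (h (\<sigma> \<inter> M)))" for \<sigma>
  proof -
    have "(\<Sum>a\<in>L. if a \<in> \<sigma> then - d a else d a) = (\<Sum>a\<in>M. if a \<in> \<sigma> then - d a else d a)"
      using fin MsubL by (intro sum.mono_neutral_right) (auto simp: M_def)
    also have "\<dots> = (\<Sum>a\<in>M. 1 - 2 * of_bool (a \<in> h (\<sigma> \<inter> M)))"
    proof (intro sum.cong refl)
      fix a assume a: "a \<in> M"
      then have "d a = 1 \<or> d a = -1" using d MsubL unfolding M_def by auto
      then show "(if a \<in> \<sigma> then - d a else d a) = 1 - 2 * of_bool (a \<in> h (\<sigma> \<inter> M))"
        using a Mpn unfolding h_def Mp_def Mn_def by auto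
    qed
    also have "\<dots> = int m - 2 * int (card (M \<inter> {a. a \<in> h (\<sigma> \<inter> M)}))"
      using finM by (simp add: sum_subtractf sum_distrib_left[symmetric] m_def)
    also have "M \<inter> {a. a \<in> h (\<sigma> \<inter> M)} = h (\<sigma> \<inter> M)" using hM by auto
    finally show ?thesis .
  qed
  define t where "t = nat ((int m - c) div 2)"
  define S' where "S' = {\<sigma>. \<sigma> \<subseteq> L \<and> card (h (\<sigma> \<inter> M)) = t}"
  define T where "T = {\<tau>. \<tau> \<subseteq> M \<and> card (h \<tau>) = t}"
  have sub: "{\<sigma>. \<sigma> \<subseteq> L \<and> (\<Sum>a\<in>L. if a \<in> \<sigma> then - d a else d a) = c} \<subseteq> S'"
  proof
    fix \<sigma> assume "\<sigma> \<in> {\<sigma>. \<sigma> \<subseteq> L \<and> (\<Sum>a\<in>L. if a \<in> \<sigma> then - d a else d a) = c}"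
    then have s: "\<sigma> \<subseteq> L" "int m - 2 * int (card (h (\<sigma> \<inter> M))) = c" using sum_eq by auto
    then have "card (h (\<sigma> \<inter> M)) = t" unfolding t_def by linarith
    then show "\<sigma> \<in> S'" using s unfolding S'_def by auto
  qed
  have finPL: "finite {\<sigma>. \<sigma> \<subseteq> L}" using fin by simp
  have c1: "card {\<sigma>. \<sigma> \<subseteq> L \<and> (\<Sum>a\<in>L. if a \<in> \<sigma> then - d a else d a) = c} \<le> card S'"
    using sub finPL by (intro card_mono) (auto simp: S'_def)
  have bij: "bij_betw (\<lambda>\<sigma>. (\<sigma> \<inter> M, \<sigma> \<inter> Z)) S' (T \<times> Pow Z)"
  proof (rule bij_betw_byWitness[where f'="\<lambda>(\<tau>, \<zeta>). \<tau> \<union> \<zeta>"])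
    show "\<forall>a\<in>S'. (case (a \<inter> M, a \<inter> Z) of (\<tau>, \<zeta>) \<Rightarrow> \<tau> \<union> \<zeta>) = a"
      unfolding S'_def Z_def by auto
    show "\<forall>a'\<in>T \<times> Pow Z. (\<lambda>\<sigma>. (\<sigma> \<inter> M, \<sigma> \<inter> Z)) (case a' of (\<tau>, \<zeta>) \<Rightarrow> \<tau> \<union> \<zeta>) = a'"
      unfolding T_def Z_def by auto
    show "(\<lambda>\<sigma>. (\<sigma> \<inter> M, \<sigma> \<inter> Z)) ` S' \<subseteq> T \<times> Pow Z"
      unfolding S'_def T_def Z_def by auto
    show "(\<lambda>(\<tau>, \<zeta>). \<tau> \<union> \<zeta>) ` (T \<times> Pow Z) \<subseteq> S'"
    proof
      fix \<sigma> assume "\<sigma> \<in> (\<lambda>(\<tau>, \<zeta>). \<tau> \<union> \<zeta>) ` (T \<times> Pow Z)"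
      then obtain \<tau> \<zeta> where tz: "\<tau> \<in> T" "\<zeta> \<subseteq> Z" "\<sigma> = \<tau> \<union> \<zeta>" by auto
      then have "\<sigma> \<inter> M = \<tau>" unfolding T_def Z_def by auto
      then show "\<sigma> \<in> S'" using tz MsubL unfolding S'_def T_def Z_def by auto
    qed
  qed
  have c2: "card S' = card T * 2 ^ card Z"
    using bij_betw_same_card[OF bij] finZ by (simp add: card_cartesian_product card_Pow)
  have injh: "inj_on h T"
  proof (rule inj_onI)
    fix \<tau> \<tau>' assume "\<tau> \<in> T" "\<tau>' \<in> T" and e: "h \<tau> = h \<tau>'"
    then have "\<tau> \<subseteq> M" "\<tau>' \<subseteq> M" unfolding T_def by auto
    have rec: "\<tau>0 = (h \<tau>0 \<inter> Mp) \<union> (Mn - h \<tau>0)" if "\<tau>0 \<subseteq> M" for \<tau>0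
      using that Mpn unfolding h_def by auto
    show "\<tau> = \<tau>'" using rec[OF \<open>\<tau> \<subseteq> M\<close>] rec[OF \<open>\<tau>' \<subseteq> M\<close>] e by simp
  qed
  have "h ` T \<subseteq> {S. S \<subseteq> M \<and> card S = t}" unfolding T_def using hM by auto
  then have "card (h ` T) \<le> card {S. S \<subseteq> M \<and> card S = t}"
    using finM by (intro card_mono) auto
  then have c3: "card T \<le> m choose t"
    using card_image[OF injh] n_subsets[OF finM, of t] unfolding m_def by simp
  have c4: "m choose t \<le> m choose (m div 2)" by (rule binomial_maximum)
  have cardL: "card L = card Z + m"
    unfolding Z_def m_def using fin MsubL by (simp add: card_Diff_subset card_mono le_add_diff_inverse2 finM)
  have "card {\<sigma>. \<sigma> \<subseteq> L \<and> (\<Sum>a\<in>L. if a \<in> \<sigma> then - d a else d a) = c} * 2 ^ m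
      \<le> (m choose (m div 2)) * 2 ^ card Z * 2 ^ m"
    using c1 c2 c3 c4 by (intro mult_right_mono) (auto intro: order_trans mult_right_mono)
  also have "\<dots> = 2 ^ card L * (m choose (m div 2))" by (simp add: cardL power_add)
  finally have "card {\<sigma>. \<sigma> \<subseteq> L \<and> (\<Sum>a\<in>L. if a \<in> \<sigma> then - d a else d a) = c} * 2 ^ m
      \<le> 2 ^ card L * (m choose (m div 2))" .
  then have "real (card {\<sigma>. \<sigma> \<subseteq> L \<and> (\<Sum>a\<in>L. if a \<in> \<sigma> then - d a else d a) = c} * 2 ^ m)
      \<le> real (2 ^ card L * (m choose (m div 2)))" by (simp only: of_nat_le_iff)
  then show ?thesis unfolding m_def M_def by simp
qed




lemma double_count:
  assumes "finite P" "finite X"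
  shows "(\<Sum>\<sigma>\<in>P. card {x\<in>X. Q \<sigma> x}) = (\<Sum>x\<in>X. card {\<sigma>\<in>P. Q \<sigma> x})"
proof -
  have "(\<Sum>\<sigma>\<in>P. card {x\<in>X. Q \<sigma> x}) = (\<Sum>\<sigma>\<in>P. \<Sum>x\<in>X. of_bool (Q \<sigma> x) :: nat)"
    using assms by (simp add: Int_def conj_commute)
  also have "\<dots> = (\<Sum>x\<in>X. \<Sum>\<sigma>\<in>P. of_bool (Q \<sigma> x) :: nat)" by (rule sum.swap)
  also have "\<dots> = (\<Sum>x\<in>X. card {\<sigma>\<in>P. Q \<sigma> x})"
    using assms by (simp add: Int_def conj_commute)
  finally show ?thesis .
qed

locale pans =
  fixes N k :: nat and L R :: "nat set" and g :: "nat \<Rightarrow> nat"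
  assumes LN: "L \<subseteq> {..<N}" and RN: "R \<subseteq> {..<N}" and LR: "L \<inter> R = {}"
    and gb: "bij_betw g L R" and k1: "1 \<le> k" and kN: "2 * k < N" and Lne: "L \<noteq> {}"
begin

definition X where "X = {x. x \<subseteq> {..<N} \<and> card x = k}"
definition D :: "nat set \<Rightarrow> int" where "D x = int (card (x \<inter> L)) - int (card (x \<inter> R))"
definition dl :: "nat set \<Rightarrow> nat \<Rightarrow> int" where "dl x a = of_bool (a \<in> x) - of_bool (g a \<in> x)"
definition mix where "mix a x \<longleftrightarrow> (a \<in> x) \<noteq> (g a \<in> x)"
definition mm where "mm x = card {a\<in>L. mix a x}"
definition sw where "sw \<sigma> i = (if i \<in> \<sigma> then g i else if i \<in> g ` \<sigma> then inv_into L g i else i)"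

lemma finL: "finite L" using LN finite_subset by blast
lemma finR: "finite R" using RN finite_subset by blast
lemma finX: "finite X" unfolding X_def by (rule finite_subset[of _ "Pow {..<N}"]) auto
lemma cardX: "card X = N choose k" unfolding X_def using n_subsets[of "{..<N}" k] by simp
lemma cardLR: "card L = card R" using gb bij_betw_same_card by blast
lemma gL: "a \<in> L \<Longrightarrow> g a \<in> R" using bij_betwE[OF gb] by blast
lemma ginv: "a \<in> L \<Longrightarrow> inv_into L g (g a) = a" by (rule bij_betw_inv_into_left[OF gb])
lemma ginvR: "r \<in> R \<Longrightarrow> inv_into L g r \<in> L \<and> g (inv_into L g r) = r"
proof
  assume r: "r \<in> R"
  show "inv_into L g r \<in> L" using bij_betwE[OF bij_betw_inv_into[OF gb]] r by blast
  show "g (inv_into L g r) = r" by (rule bij_betw_inv_into_right[OF gb r])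
qed
lemma injg: "inj_on g L" using gb unfolding bij_betw_def by simp

lemma D_dl: "D x = (\<Sum>a\<in>L. dl x a)"
proof -
  have "(\<Sum>a\<in>L. of_bool (g a \<in> x) :: int) = (\<Sum>r\<in>R. of_bool (r \<in> x))"
    by (rule sum.reindex_bij_betw[OF gb])
  also have "\<dots> = int (card (x \<inter> R))" using finR by (simp add: Int_commute Int_def)
  finally have 1: "(\<Sum>a\<in>L. of_bool (g a \<in> x) :: int) = int (card (x \<inter> R))" .
  have 2: "(\<Sum>a\<in>L. of_bool (a \<in> x) :: int) = int (card (x \<inter> L))"
    using finL by (simp add: Int_commute Int_def)
  show ?thesis unfolding D_def dl_def using 1 2 by (simp add: sum_subtractf)
qed

lemma dl_vals: "dl x a \<in> {-1,0,1}" unfolding dl_def by auto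
lemma dl_mix: "{a\<in>L. dl x a \<noteq> 0} = {a\<in>L. mix a x}" unfolding dl_def mix_def by auto

context
  fixes \<sigma> assumes \<sigma>L: "\<sigma> \<subseteq> L"
begin

lemma sw_L: "a \<in> L \<Longrightarrow> sw \<sigma> a = (if a \<in> \<sigma> then g a else a)"
proof -
  assume a: "a \<in> L"
  have "a \<notin> g ` \<sigma>" using a \<sigma>L gL LR by blast
  then show ?thesis unfolding sw_def by simp
qed

lemma sw_gL: "a \<in> L \<Longrightarrow> sw \<sigma> (g a) = (if a \<in> \<sigma> then a else g a)"
proof -
  assume a: "a \<in> L"
  have "g a \<notin> \<sigma>" using a \<sigma>L gL LR by blast
  moreover have "g a \<in> g ` \<sigma> \<longleftrightarrow> a \<in> \<sigma>" using injg a \<sigma>L by (auto dest: inj_onD)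
  ultimately show ?thesis unfolding sw_def using ginv[OF a] by simp
qed

lemma sw_out: "i \<notin> L \<Longrightarrow> i \<notin> R \<Longrightarrow> sw \<sigma> i = i"
  unfolding sw_def using \<sigma>L gL by auto

lemma sw_sw: "sw \<sigma> (sw \<sigma> i) = i"
proof -
  consider "i \<in> L" | "i \<in> R" | "i \<notin> L" "i \<notin> R" by blast
  then show ?thesis
  proof cases
    case 1 then show ?thesis by (simp add: sw_L sw_gL)
  next
    case 2
    then obtain a where a: "a \<in> L" "i = g a" using ginvR by metis
    then show ?thesis by (simp add: sw_L sw_gL)
  next
    case 3 then show ?thesis by (simp add: sw_out)
  qed
qed

lemma sw_lt: "i < N \<Longrightarrow> sw \<sigma> i < N"
proof -
  assume i: "i < N"
  consider "i \<in> L" | "i \<in> R" | "i \<notin> L" "i \<notin> R" by blast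
  then show ?thesis
  proof cases
    case 1 then show ?thesis using sw_L gL RN LN by auto
  next
    case 2
    then obtain a where a: "a \<in> L" "i = g a" using ginvR by metis
    then show ?thesis using sw_gL LN i by auto
  next
    case 3 then show ?thesis using i by (simp add: sw_out)
  qed
qed

lemma inj_sw: "inj (sw \<sigma>)" by (metis injI sw_sw)

lemma img_mem: "i \<in> sw \<sigma> ` x \<longleftrightarrow> sw \<sigma> i \<in> x"
  by (metis image_iff sw_sw)

lemma img_img: "sw \<sigma> ` (sw \<sigma> ` x) = x"
  by (auto simp: image_image sw_sw)

lemma swX: "x \<in> X \<Longrightarrow> sw \<sigma> ` x \<in> X"
proof -
  assume x: "x \<in> X"
  have "card (sw \<sigma> ` x) = card x" using inj_sw by (simp add: card_image inj_on_subset)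
  moreover have "sw \<sigma> ` x \<subseteq> {..<N}" using x sw_lt unfolding X_def by auto
  ultimately show ?thesis using x unfolding X_def by auto
qed

lemma dl_sw: "a \<in> L \<Longrightarrow> dl (sw \<sigma> ` x) a = (if a \<in> \<sigma> then - dl x a else dl x a)"
  unfolding dl_def img_mem by (simp add: sw_L sw_gL)

lemma D_sw: "D (sw \<sigma> ` x) = (\<Sum>a\<in>L. if a \<in> \<sigma> then - dl x a else dl x a)"
  unfolding D_dl by (rule sum.cong) (auto simp: dl_sw)

lemma card_pre: "card {x\<in>X. D (sw \<sigma> ` x) = 0} = card {x\<in>X. D x = 0}"
proof (rule bij_betw_same_card[of "\<lambda>x. sw \<sigma> ` x"])
  show "bij_betw (\<lambda>x. sw \<sigma> ` x) {x\<in>X. D (sw \<sigma> ` x) = 0} {x\<in>X. D x = 0}"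
  proof (rule bij_betw_byWitness[where f'="\<lambda>x. sw \<sigma> ` x"])
    show "\<forall>a\<in>{x\<in>X. D (sw \<sigma> ` x) = 0}. sw \<sigma> ` (sw \<sigma> ` a) = a" using img_img by blast
    show "\<forall>a\<in>{x\<in>X. D x = 0}. sw \<sigma> ` (sw \<sigma> ` a) = a" using img_img by blast
    show "(\<lambda>x. sw \<sigma> ` x) ` {x\<in>X. D (sw \<sigma> ` x) = 0} \<subseteq> {x\<in>X. D x = 0}"
    proof
      fix y assume "y \<in> (\<lambda>x. sw \<sigma> ` x) ` {x\<in>X. D (sw \<sigma> ` x) = 0}"
      then obtain x where "x \<in> X" "D (sw \<sigma> ` x) = 0" "y = sw \<sigma> ` x" by blast
      then show "y \<in> {x\<in>X. D x = 0}" using swX by blast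
    qed
    show "(\<lambda>x. sw \<sigma> ` x) ` {x\<in>X. D x = 0} \<subseteq> {x\<in>X. D (sw \<sigma> ` x) = 0}"
    proof
      fix y assume "y \<in> (\<lambda>x. sw \<sigma> ` x) ` {x\<in>X. D x = 0}"
      then obtain x where "x \<in> X" "D x = 0" "y = sw \<sigma> ` x" by blast
      then show "y \<in> {x\<in>X. D (sw \<sigma> ` x) = 0}" using swX img_img by simp
    qed
  qed
qed

end

definition beta :: "nat \<Rightarrow> real" where "beta m = real (m choose (m div 2)) / 2 ^ m"

lemma bal_le: "real (card {x\<in>X. D x = 0}) \<le> (\<Sum>x\<in>X. beta (mm x))"
proof -
  let ?P = "{\<sigma>. \<sigma> \<subseteq> L}"
  let ?l = "card L"
  have finP: "finite ?P" using finL by simp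
  have cP: "card ?P = 2 ^ ?l" using card_Pow[OF finL] by (simp add: Pow_def)
  have "2 ^ ?l * card {x\<in>X. D x = 0} = (\<Sum>\<sigma>\<in>?P. card {x\<in>X. D (sw \<sigma> ` x) = 0})"
    using cP by (simp add: card_pre)
  also have "\<dots> = (\<Sum>x\<in>X. card {\<sigma>\<in>?P. D (sw \<sigma> ` x) = 0})"
    by (rule double_count[OF finP finX])
  finally have e0: "2 ^ ?l * card {x\<in>X. D x = 0} = (\<Sum>x\<in>X. card {\<sigma>\<in>?P. D (sw \<sigma> ` x) = 0})" .
  have e: "real (2 ^ ?l * card {x\<in>X. D x = 0}) = (\<Sum>x\<in>X. real (card {\<sigma>\<in>?P. D (sw \<sigma> ` x) = 0}))"
    unfolding e0 by (rule of_nat_sum)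
  have each: "real (card {\<sigma>\<in>?P. D (sw \<sigma> ` x) = 0}) \<le> 2 ^ ?l * beta (mm x)" for x
  proof -
    have eq: "{\<sigma>\<in>?P. D (sw \<sigma> ` x) = 0} = {\<sigma>. \<sigma> \<subseteq> L \<and> (\<Sum>a\<in>L. if a \<in> \<sigma> then - dl x a else dl x a) = 0}"
    proof (rule Collect_cong)
      fix \<sigma>
      show "(\<sigma> \<in> ?P \<and> D (sw \<sigma> ` x) = 0) = (\<sigma> \<subseteq> L \<and> (\<Sum>a\<in>L. if a \<in> \<sigma> then - dl x a else dl x a) = 0)"
        using D_sw[of \<sigma> x] by (cases "\<sigma> \<subseteq> L") simp_all
    qed
    have "real (card {\<sigma>. \<sigma> \<subseteq> L \<and> (\<Sum>a\<in>L. if a \<in> \<sigma> then - dl x a else dl x a) = 0}) * 2 ^ card {a\<in>L. dl x a \<noteq> 0}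
         \<le> 2 ^ card L * real (card {a\<in>L. dl x a \<noteq> 0} choose (card {a\<in>L. dl x a \<noteq> 0} div 2))"
      using finL dl_vals by (intro sign_count) auto
    then have "real (card {\<sigma>\<in>?P. D (sw \<sigma> ` x) = 0}) * 2 ^ mm x \<le> 2 ^ ?l * real (mm x choose (mm x div 2))"
      unfolding eq dl_mix mm_def .
    then show ?thesis unfolding beta_def by (simp add: field_simps)
  qed
  have "real (2 ^ ?l) * real (card {x\<in>X. D x = 0}) = (\<Sum>x\<in>X. real (card {\<sigma>\<in>?P. D (sw \<sigma> ` x) = 0}))"
    using e by simp
  also have "\<dots> \<le> (\<Sum>x\<in>X. 2 ^ ?l * beta (mm x))" by (rule sum_mono) (rule each)
  also have "\<dots> = real (2 ^ ?l) * (\<Sum>x\<in>X. beta (mm x))" by (simp add: sum_distrib_left)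
  finally have "real (2 ^ ?l) * real (card {x\<in>X. D x = 0}) \<le> real (2 ^ ?l) * (\<Sum>x\<in>X. beta (mm x))" .
  then show ?thesis by (simp add: mult_le_cancel_left_pos)
qed

end




lemma poly_P:
  fixes Nr kr :: real
  assumes k2: "kr \<ge> 2" and N: "Nr \<ge> 2*kr+1"
  shows "Nr*(Nr-1)*((kr-1)*(Nr-kr-1)) \<le> kr*(Nr-kr)*(Nr-2)*(Nr-3) + (Nr-1)*(Nr-2)*(Nr-3)"
proof -
  define u where "u = kr*(Nr-kr)"
  have u4: "4*u \<le> Nr^2" unfolding u_def using sum_squares_ge_zero[of "Nr - 2*kr" 0]
    by (simp add: power2_eq_square algebra_simps)
  have N5: "Nr \<ge> 5" using k2 N by linarith
  have a: "(kr-1)*(Nr-kr-1) = u - Nr + 1" unfolding u_def by (simp add: algebra_simps)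
  have goal: "Nr*(Nr-1)*(u - Nr + 1) \<le> u*(Nr-2)*(Nr-3) + (Nr-1)*(Nr-2)*(Nr-3)"
  proof -
    have e: "u*(Nr-2)*(Nr-3) + (Nr-1)*(Nr-2)*(Nr-3) - Nr*(Nr-1)*(u - Nr + 1)
          = (Nr-1)*(2*Nr^2-6*Nr+6) - u*(4*Nr-6)"
      by (simp add: algebra_simps power2_eq_square)
    have "u*(4*Nr-6) \<le> (Nr^2/4)*(4*Nr-6)"
      using u4 N5 by (intro mult_right_mono) auto
    moreover have "(Nr^2/4)*(4*Nr-6) \<le> (Nr-1)*(2*Nr^2-6*Nr+6)"
    proof -
      define t where "t = Nr - 5"
      have t0: "t \<ge> 0" using N5 unfolding t_def by simp
      have "(Nr-1)*(2*Nr^2-6*Nr+6) - (Nr^2/4)*(4*Nr-6) = t^3 + 17/2*t^2 + 22*t + 33/2"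
        unfolding t_def by (simp add: algebra_simps power2_eq_square power3_eq_cube)
      moreover have "t^3 + 17/2*t^2 + 22*t + 33/2 \<ge> 0" using t0 by simp
      ultimately show ?thesis by linarith
    qed
    ultimately show ?thesis using e by linarith
  qed
  then show ?thesis unfolding a u_def by simp
qed

lemma ki_arith:
  fixes A B C Nr kr :: real
  assumes k2: "kr \<ge> 2" and N: "Nr \<ge> 2*kr+1"
    and I1: "A*kr*(Nr-kr) = Nr*(Nr-1)*B" and I2: "B*(kr-1)*(Nr-kr-1) = (Nr-2)*(Nr-3)*C"
    and B0: "B \<ge> 0"
  shows "Nr*A*C \<le> Nr*B^2 + A*B"
proof -
  define Q where "Q = kr*(Nr-kr)*(Nr-2)*(Nr-3)"
  have Q0: "Q > 0" unfolding Q_def using k2 N by (intro mult_pos_pos) auto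
  have "(Nr*A*C)*Q = Nr*(A*kr*(Nr-kr))*(C*(Nr-2)*(Nr-3))" unfolding Q_def by (simp add: algebra_simps)
  also have "\<dots> = Nr*(Nr*(Nr-1)*B)*((Nr-2)*(Nr-3)*C)" using I1 by (simp add: mult_ac)
  also have "\<dots> = Nr*(Nr*(Nr-1)*B)*(B*(kr-1)*(Nr-kr-1))" using I2 by simp
  also have "\<dots> = (Nr*B^2) * (Nr*(Nr-1)*((kr-1)*(Nr-kr-1)))" by (simp add: algebra_simps power2_eq_square)
  also have "\<dots> \<le> (Nr*B^2) * (kr*(Nr-kr)*(Nr-2)*(Nr-3) + (Nr-1)*(Nr-2)*(Nr-3))"
    using poly_P[OF k2 N] B0 N k2 by (intro mult_left_mono) auto
  also have "\<dots> = Nr*B^2*Q + (A*kr*(Nr-kr))*B*(Nr-2)*(Nr-3)"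
    unfolding Q_def I1 by (simp add: algebra_simps power2_eq_square)
  also have "\<dots> = (Nr*B^2 + A*B)*Q" unfolding Q_def by (simp add: algebra_simps)
  finally show ?thesis using Q0 by (simp add: mult_le_cancel_right_pos)
qed




context pans begin

definition e2 :: real where "e2 = (if 2 \<le> k then real ((N-4) choose (k-2)) else 0)"
definition c1 :: real where "c1 = 2 * real ((N-2) choose (k-1))"

lemma setX: "X \<inter> {x. P x} = {x. x \<subseteq> {..<N} \<and> card x = k \<and> P x}" unfolding X_def by auto

lemma E1:
  assumes "p < N" "r < N" "p \<noteq> r"
  shows "(\<Sum>x\<in>X. of_bool (p \<in> x \<and> r \<notin> x) :: real) = real ((N-2) choose (k-1))"
proof -
  have "(\<Sum>x\<in>X. of_bool (p \<in> x \<and> r \<notin> x) :: real) = real (card (X \<inter> {x. {p} \<subseteq> x \<and> x \<inter> {r} = {}}))"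
    using finX by simp
  also have "X \<inter> {x. {p} \<subseteq> x \<and> x \<inter> {r} = {}} = {x. x \<subseteq> {..<N} \<and> card x = k \<and> {p} \<subseteq> x \<and> x \<inter> {r} = {}}"
    by (rule setX)
  also have "card \<dots> = (card {..<N} - card {p} - card {r}) choose (k - card {p})"
    using assms k1 by (intro cnt) auto
  finally show ?thesis by (simp add: numeral_2_eq_2)
qed

lemma E2:
  assumes "p < N" "q < N" "r < N" "s < N" "p \<noteq> q" "r \<noteq> s" "p \<noteq> r" "p \<noteq> s" "q \<noteq> r" "q \<noteq> s"
  shows "(\<Sum>x\<in>X. of_bool (p \<in> x \<and> r \<notin> x) * of_bool (q \<in> x \<and> s \<notin> x) :: real) = e2"
proof -
  have "(\<Sum>x\<in>X. of_bool (p \<in> x \<and> r \<notin> x) * of_bool (q \<in> x \<and> s \<notin> x) :: real)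
      = (\<Sum>x\<in>X. of_bool ({p,q} \<subseteq> x \<and> x \<inter> {r,s} = {}))"
    by (intro sum.cong refl) auto
  also have "\<dots> = real (card (X \<inter> {x. {p,q} \<subseteq> x \<and> x \<inter> {r,s} = {}}))"
    using finX by simp
  also have "X \<inter> {x. {p,q} \<subseteq> x \<and> x \<inter> {r,s} = {}} = {x. x \<subseteq> {..<N} \<and> card x = k \<and> {p,q} \<subseteq> x \<and> x \<inter> {r,s} = {}}"
    by (rule setX)
  finally have e: "(\<Sum>x\<in>X. of_bool (p \<in> x \<and> r \<notin> x) * of_bool (q \<in> x \<and> s \<notin> x) :: real)
     = real (card {x. x \<subseteq> {..<N} \<and> card x = k \<and> {p,q} \<subseteq> x \<and> x \<inter> {r,s} = {}})" .
  have cpq: "card {p,q} = 2" "card {r,s} = 2" using assms by auto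
  show ?thesis
  proof (cases "2 \<le> k")
    case True
    have "card {x. x \<subseteq> {..<N} \<and> card x = k \<and> {p,q} \<subseteq> x \<and> x \<inter> {r,s} = {}}
        = (card {..<N} - card {p,q} - card {r,s}) choose (k - card {p,q})"
      using assms True cpq by (intro cnt) auto
    then show ?thesis using e True cpq unfolding e2_def by simp
  next
    case False
    have "card {x. x \<subseteq> {..<N} \<and> card x = k \<and> {p,q} \<subseteq> x \<and> x \<inter> {r,s} = {}} = 0"
      using False cpq by (intro cnt0) auto
    then show ?thesis using e False unfolding e2_def by simp
  qed
qed

lemma aLN: "a \<in> L \<Longrightarrow> a < N" using LN by auto
lemma gLN: "a \<in> L \<Longrightarrow> g a < N" using RN gL by auto
lemma ga_ne: "a \<in> L \<Longrightarrow> b \<in> L \<Longrightarrow> g a \<noteq> b" using gL LR by auto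
lemma gg_ne: "a \<in> L \<Longrightarrow> b \<in> L \<Longrightarrow> a \<noteq> b \<Longrightarrow> g a \<noteq> g b" using injg by (auto dest: inj_onD)

lemma chi_split: "a \<in> L \<Longrightarrow> (of_bool (mix a x) :: real) = of_bool (a \<in> x \<and> g a \<notin> x) + of_bool (g a \<in> x \<and> a \<notin> x)"
  unfolding mix_def by auto

lemma s1: "a \<in> L \<Longrightarrow> (\<Sum>x\<in>X. of_bool (mix a x) :: real) = c1"
proof -
  assume a: "a \<in> L"
  have "(\<Sum>x\<in>X. of_bool (mix a x) :: real) = (\<Sum>x\<in>X. of_bool (a \<in> x \<and> g a \<notin> x)) + (\<Sum>x\<in>X. of_bool (g a \<in> x \<and> a \<notin> x))"
    by (simp add: chi_split[OF a] sum.distrib)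
  also have "\<dots> = c1" unfolding c1_def
    using E1[of a "g a"] E1[of "g a" a] aLN[OF a] gLN[OF a] ga_ne[OF a a] by simp
  finally show ?thesis .
qed

lemma s2: "a \<in> L \<Longrightarrow> b \<in> L \<Longrightarrow> a \<noteq> b \<Longrightarrow> (\<Sum>x\<in>X. of_bool (mix a x) * of_bool (mix b x) :: real) = 4 * e2"
proof -
  assume a: "a \<in> L" and b: "b \<in> L" and ab: "a \<noteq> b"
  have N: "a < N" "b < N" "g a < N" "g b < N" using a b aLN gLN by auto
  have ne: "g a \<noteq> b" "g b \<noteq> a" "g a \<noteq> a" "g b \<noteq> b" "g a \<noteq> g b" "b \<noteq> g a" "a \<noteq> g b" "a \<noteq> g a" "b \<noteq> g b"
    using ga_ne gg_ne a b ab by metis+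
  have "(\<Sum>x\<in>X. of_bool (mix a x) * of_bool (mix b x) :: real)
     = (\<Sum>x\<in>X. of_bool (a \<in> x \<and> g a \<notin> x) * of_bool (b \<in> x \<and> g b \<notin> x))
     + (\<Sum>x\<in>X. of_bool (a \<in> x \<and> g a \<notin> x) * of_bool (g b \<in> x \<and> b \<notin> x))
     + (\<Sum>x\<in>X. of_bool (g a \<in> x \<and> a \<notin> x) * of_bool (b \<in> x \<and> g b \<notin> x))
     + (\<Sum>x\<in>X. of_bool (g a \<in> x \<and> a \<notin> x) * of_bool (g b \<in> x \<and> b \<notin> x))"
    by (simp add: chi_split[OF a] chi_split[OF b] sum.distrib algebra_simps)
  also have "\<dots> = 4 * e2"
    using E2[of a b "g a" "g b"] E2[of a "g b" "g a" b] E2[of "g a" b a "g b"] E2[of "g a" "g b" a b] N ne ab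
    by simp
  finally show ?thesis .
qed

lemma mm_real: "real (mm x) = (\<Sum>a\<in>L. of_bool (mix a x))"
  unfolding mm_def using finL by (simp add: Int_def)

lemma sum_mm: "(\<Sum>x\<in>X. real (mm x)) = real (card L) * c1"
proof -
  have "(\<Sum>x\<in>X. real (mm x)) = (\<Sum>a\<in>L. \<Sum>x\<in>X. of_bool (mix a x))"
    unfolding mm_real by (rule sum.swap)
  also have "\<dots> = (\<Sum>a\<in>L. c1)" by (rule sum.cong) (auto simp: s1)
  finally show ?thesis by simp
qed

lemma sum_mm2: "(\<Sum>x\<in>X. (real (mm x))\<^sup>2) = real (card L) * (c1 + (real (card L) - 1) * (4 * e2))"
proof -
  have "(\<Sum>x\<in>X. (real (mm x))\<^sup>2) = (\<Sum>x\<in>X. \<Sum>a\<in>L. \<Sum>b\<in>L. of_bool (mix a x) * of_bool (mix b x))"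
    unfolding mm_real power2_eq_square by (simp add: sum_product)
  also have "\<dots> = (\<Sum>a\<in>L. \<Sum>b\<in>L. \<Sum>x\<in>X. of_bool (mix a x) * of_bool (mix b x))"
    by (simp add: sum.swap[of _ X])
  also have "\<dots> = (\<Sum>a\<in>L. c1 + (real (card L) - 1) * (4 * e2))"
  proof (rule sum.cong[OF refl])
    fix a assume a: "a \<in> L"
    have "(\<Sum>b\<in>L. \<Sum>x\<in>X. of_bool (mix a x) * of_bool (mix b x) :: real)
        = (\<Sum>x\<in>X. of_bool (mix a x) * of_bool (mix a x)) + (\<Sum>b\<in>L-{a}. \<Sum>x\<in>X. of_bool (mix a x) * of_bool (mix b x))"
      using a finL by (simp add: sum.remove)
    also have "(\<Sum>x\<in>X. of_bool (mix a x) * of_bool (mix a x) :: real) = c1"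
    proof -
      have "(\<Sum>x\<in>X. of_bool (mix a x) * of_bool (mix a x) :: real) = (\<Sum>x\<in>X. of_bool (mix a x))"
        by (intro sum.cong refl) (case_tac "mix a x"; simp)
      then show ?thesis using s1[OF a] by simp
    qed
    also have "(\<Sum>b\<in>L-{a}. \<Sum>x\<in>X. of_bool (mix a x) * of_bool (mix b x)) = (\<Sum>b\<in>L-{a}. 4 * e2)"
      using a by (intro sum.cong refl) (auto simp: s2)
    also have "\<dots> = (real (card L) - 1) * (4 * e2)"
    proof -
      have "L \<noteq> {}" using a by blast
      then have "card L \<ge> 1" using finL by (simp add: Suc_le_eq card_gt_0_iff)
      then show ?thesis using a finL by (simp add: card_Diff_singleton of_nat_diff)
    qed
    finally show "(\<Sum>b\<in>L. \<Sum>x\<in>X. of_bool (mix a x) * of_bool (mix b x)) = c1 + (real (card L) - 1) * (4 * e2)" .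
  qed
  finally show ?thesis by simp
qed

end



lemma var_arith:
  fixes n c1 c2 l Nr :: real
  assumes n: "n > 0" and c1: "c1 \<ge> 0" and c2: "c2 \<ge> 0" and l: "l \<ge> 1" and lN: "2*l \<le> Nr"
    and KI: "Nr*n*c2 \<le> Nr*c1^2 + 2*n*c1"
  shows "n*(l-1)*c2 \<le> n*c1 + l*c1^2"
proof (cases "n*c2 \<le> c1^2")
  case True
  have "n*(l-1)*c2 = (l-1)*(n*c2)" by (simp add: algebra_simps)
  also have "\<dots> \<le> (l-1)*c1^2" using True l by (intro mult_left_mono) auto
  also have "\<dots> \<le> l*c1^2" by (simp add: algebra_simps)
  also have "\<dots> \<le> n*c1 + l*c1^2" using n c1 by simp
  finally show ?thesis .
next
  case False
  have "n*(l-1)*c2 \<le> l*(n*c2)" using n c2 by (simp add: algebra_simps)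
  also have "\<dots> = l*(n*c2 - c1^2) + l*c1^2" by (simp add: algebra_simps)
  also have "l*(n*c2 - c1^2) \<le> (Nr/2)*(n*c2 - c1^2)" using False lN by (intro mult_right_mono) auto
  also have "(Nr/2)*(n*c2 - c1^2) \<le> n*c1" using KI by (simp add: algebra_simps)
  finally show ?thesis by simp
qed

lemma cheb:
  fixes m mu :: real
  assumes "mu > 0" "m \<ge> 0"
  shows "mu^2 / (m+1) \<le> 4*(m-mu)^2 + 2*mu"
proof (cases "2*m \<ge> mu")
  case True
  have "mu^2 / (m+1) \<le> mu^2 / (mu/2)"
    using assms True by (intro divide_left_mono) (auto simp: mult_pos_pos)
  also have "\<dots> = 2*mu" using assms by (simp add: power2_eq_square field_simps)
  finally show ?thesis by (simp add: add_increasing)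
next
  case False
  then have "mu - m \<ge> mu/2" by simp
  then have "(mu/2)^2 \<le> (mu-m)^2" using assms by (intro power_mono) auto
  then have "mu^2 \<le> 4*(m-mu)^2" by (simp add: power2_eq_square algebra_simps)
  moreover have "mu^2 / (m+1) \<le> mu^2" using assms by (simp add: divide_le_eq)
  ultimately show ?thesis using assms by linarith
qed

context pans begin

lemma beta_sq: "(beta m)^2 \<le> 2 / (real m + 1)"
proof -
  have "(real (m choose (m div 2)))^2 * (real m+1) \<le> 2 * 4^m" using cb[of m] by (simp add: add.commute)
  then have "(real (m choose (m div 2)))^2 \<le> 2 * 4^m / (real m + 1)" by (simp add: le_divide_eq)
  then have "(real (m choose (m div 2)))^2 / 4^m \<le> 2 / (real m + 1)"
    by (simp add: divide_le_eq field_simps)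
  moreover have "(beta m)^2 = (real (m choose (m div 2)))^2 / 4^m"
    unfolding beta_def by (simp add: power_divide power_mult[symmetric] mult.commute[of m 2] power_mult)
  ultimately show ?thesis by simp
qed


lemma N3: "N \<ge> 3" using k1 kN by simp

lemma twoL: "2 * card L \<le> N"
proof -
  have "card (L \<union> R) = card L + card R" using finL finR LR by (simp add: card_Un_disjoint)
  moreover have "card (L \<union> R) \<le> card {..<N}" using LN RN by (intro card_mono) auto
  ultimately show ?thesis using cardLR by simp
qed

lemma I1: "real (N choose k) * real k * (real N - real k) = real N * (real N - 1) * real ((N-2) choose (k-1))"
proof -
  have h: "((N-2+2) choose (k-1+1)) * (k-1+1) * (N-2+1-(k-1)) = (N-2+2)*(N-2+1)*((N-2) choose (k-1))"
    using k1 kN by (intro choose_absorb2) auto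
  have e: "N-2+2 = N" "k-1+1 = k" "N-2+1-(k-1) = N-k" "N-2+1 = N-1" "N - 1 - (k-1) = N - k" using k1 kN by auto
  have "(N choose k) * k * (N-k) = N*(N-1)*((N-2) choose (k-1))" using h unfolding e .
  then have "real ((N choose k) * k * (N-k)) = real (N*(N-1)*((N-2) choose (k-1)))" by simp
  then show ?thesis using k1 kN by (simp add: of_nat_diff)
qed

lemma I2: "2 \<le> k \<Longrightarrow> real ((N-2) choose (k-1)) * (real k - 1) * (real N - real k - 1)
    = (real N - 2) * (real N - 3) * real ((N-4) choose (k-2))"
proof -
  assume k2: "2 \<le> k"
  have h: "((N-4+2) choose (k-2+1)) * (k-2+1) * (N-4+1-(k-2)) = (N-4+2)*(N-4+1)*((N-4) choose (k-2))"
    using k2 kN by (intro choose_absorb2) auto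
  have e: "N-4+2 = N-2" "k-2+1 = k-1" "N-4+1-(k-2) = N-k-1" "N-4+1 = N-3" "N - 3 - (k-2) = N - k - 1" using k2 kN by auto
  have "((N-2) choose (k-1)) * (k-1) * (N-k-1) = (N-2)*(N-3)*((N-4) choose (k-2))" using h unfolding e .
  then have "real (((N-2) choose (k-1)) * (k-1) * (N-k-1)) = real ((N-2)*(N-3)*((N-4) choose (k-2)))" by simp
  moreover have "real (N-k-1) = real N - real k - 1" "real (k-1) = real k - 1"
    "real (N-2) = real N - 2" "real (N-3) = real N - 3" using k2 kN by (auto simp: of_nat_diff)
  ultimately show ?thesis by (simp only: of_nat_mult)
qed

lemma KI: "real N * real (card X) * (4*e2) \<le> real N * c1^2 + 2 * real (card X) * c1"
proof (cases "2 \<le> k")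
  case False
  then show ?thesis unfolding e2_def c1_def by simp
next
  case True
  define A where "A = real (N choose k)"
  define B where "B = real ((N-2) choose (k-1))"
  define C where "C = real ((N-4) choose (k-2))"
  have "real N * A * C \<le> real N * B^2 + A * B"
  proof (rule ki_arith[where kr="real k"])
    show "real k \<ge> 2" using True by simp
    show "real N \<ge> 2 * real k + 1" using kN by simp
    show "A * real k * (real N - real k) = real N * (real N - 1) * B" unfolding A_def B_def by (rule I1)
    show "B * (real k - 1) * (real N - real k - 1) = (real N - 2) * (real N - 3) * C"
      unfolding B_def C_def by (rule I2[OF True])
    show "B \<ge> 0" unfolding B_def by simp
  qed
  then show ?thesis unfolding e2_def c1_def using True cardX
    by (simp add: A_def B_def C_def power2_eq_square algebra_simps)
qed

lemma n_pos: "real (card X) > 0" using cardX kN by simp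
lemma c1_pos: "c1 > 0" unfolding c1_def using k1 kN by simp
lemma l_pos: "card L \<ge> 1" using Lne finL by (simp add: Suc_le_eq card_gt_0_iff)

lemma mu_ge: "real (card L) * c1 / real (card X) \<ge> real (card L) * real k / real N"
proof -
  have I: "real (card X) * real k * (real N - real k) = real N * (real N - 1) * (c1/2)"
    using I1 cardX unfolding c1_def by simp
  have "c1 / real (card X) \<ge> real k / real N"
  proof -
    have Npos: "real N > 0" using N3 by simp
    have "real k * real (card X) * (real N - 1) \<le> real k * real (card X) * (2*(real N - real k))"
      using kN n_pos by (intro mult_left_mono) auto
    also have "\<dots> = 2 * (real (card X) * real k * (real N - real k))" by (simp add: algebra_simps)
    also have "\<dots> = c1 * real N * (real N - 1)" using I by (simp add: algebra_simps)
    finally have "real k * real (card X) * (real N - 1) \<le> c1 * real N * (real N - 1)" .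
    then have "real k * real (card X) \<le> c1 * real N"
      using N3 by (simp add: mult_le_cancel_right_pos)
    then show ?thesis using Npos n_pos by (simp add: divide_le_eq le_divide_eq mult.commute)
  qed
  then show ?thesis using l_pos by (simp add: mult_left_mono times_divide_eq_right[symmetric] del: times_divide_eq_right)
qed

lemma variance:
  defines "mu \<equiv> real (card L) * c1 / real (card X)"
  shows "(\<Sum>x\<in>X. (real (mm x) - mu)^2) \<le> 2 * real (card X) * mu"
proof -
  let ?n = "real (card X)" and ?l = "real (card L)"
  have smu: "(\<Sum>x\<in>X. real (mm x)) = ?n * mu" unfolding sum_mm mu_def using n_pos by simp
  have "(\<Sum>x\<in>X. (real (mm x) - mu)^2) = (\<Sum>x\<in>X. (real (mm x))^2 - 2*mu*real (mm x) + mu^2)"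
    by (intro sum.cong refl) (simp add: power2_eq_square algebra_simps)
  also have "\<dots> = (\<Sum>x\<in>X. (real (mm x))^2) - 2*mu*(\<Sum>x\<in>X. real (mm x)) + ?n*mu^2"
    by (simp add: sum.distrib sum_subtractf sum_distrib_left)
  also have "\<dots> = ?l * (c1 + (?l - 1) * (4 * e2)) - ?n*mu^2"
    unfolding smu sum_mm2 by (simp add: power2_eq_square algebra_simps)
  also have "\<dots> \<le> 2 * ?n * mu"
  proof -
    have va: "?n*(?l-1)*(4*e2) \<le> ?n*c1 + ?l*c1^2"
      apply (rule var_arith[OF n_pos _ _ _ _ KI])
      using c1_pos l_pos twoL by (auto simp: e2_def)
    have "?n * (?l * (c1 + (?l - 1) * (4 * e2)) - ?n*mu^2) = ?l * (?n*c1 + ?n*(?l-1)*(4*e2)) - ?l^2 * c1^2"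
      unfolding mu_def using n_pos by (simp add: power2_eq_square field_simps)
    also have "\<dots> \<le> ?l * (?n*c1 + (?n*c1 + ?l*c1^2)) - ?l^2 * c1^2"
    proof -
      have "?l * (?n*c1 + ?n*(?l-1)*(4*e2)) \<le> ?l * (?n*c1 + (?n*c1 + ?l*c1^2))"
        apply (rule mult_left_mono)
        using va apply linarith
        by simp
      then show ?thesis by linarith
    qed
    also have "\<dots> = ?n * (2 * ?n * mu)"
      unfolding mu_def using n_pos by (simp add: power2_eq_square field_simps)
    finally show ?thesis using n_pos by (simp add: mult_le_cancel_left_pos)
  qed
  finally show ?thesis .
qed

theorem main_pans:
  "(real (card {x\<in>X. D x = 0}))^2 * (real (card L) * real k / real N) \<le> 20 * (real (card X))^2"
proof -
  let ?n = "real (card X)"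
  define mu where "mu = real (card L) * c1 / real (card X)"
  have mu0: "mu > 0" unfolding mu_def using n_pos c1_pos l_pos by simp
  have b0: "0 \<le> beta m" for m unfolding beta_def by simp
  have s1: "real (card {x\<in>X. D x = 0}) \<le> (\<Sum>x\<in>X. beta (mm x))" by (rule bal_le)
  have "(\<Sum>x\<in>X. beta (mm x)) \<le> sqrt (?n * (\<Sum>x\<in>X. (beta (mm x))^2))"
    using finX b0 by (intro sum_le_sqrt_card) auto
  then have s2: "(real (card {x\<in>X. D x = 0}))^2 \<le> ?n * (\<Sum>x\<in>X. (beta (mm x))^2)"
    using s1 by (smt (verit) of_nat_0_le_iff power_mono real_sqrt_pow2 sum_nonneg zero_le_power2 mult_nonneg_nonneg)
  have "mu^2 * (\<Sum>x\<in>X. (beta (mm x))^2) \<le> (\<Sum>x\<in>X. 2 * (mu^2 / (real (mm x) + 1)))"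
    unfolding sum_distrib_left
    using beta_sq by (intro sum_mono) (simp add: mult_left_mono mult.commute[of 2] times_divide_eq_right[symmetric] del: times_divide_eq_right)
  also have "\<dots> \<le> (\<Sum>x\<in>X. 2 * (4*(real (mm x) - mu)^2 + 2*mu))"
  proof (intro sum_mono)
    fix x assume "x \<in> X"
    have "mu^2 / (real (mm x) + 1) \<le> 4*(real (mm x) - mu)^2 + 2*mu" by (rule cheb[OF mu0]) simp
    then show "2 * (mu^2 / (real (mm x) + 1)) \<le> 2 * (4*(real (mm x) - mu)^2 + 2*mu)"
      using mult_left_mono[of _ _ "2::real"] by simp
  qed
  also have "\<dots> = 8 * (\<Sum>x\<in>X. (real (mm x) - mu)^2) + 4 * ?n * mu"
    by (simp add: sum.distrib sum_distrib_left algebra_simps)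
  also have "\<dots> \<le> 8 * (2 * ?n * mu) + 4 * ?n * mu"
    using variance unfolding mu_def by simp
  finally have s3: "mu^2 * (\<Sum>x\<in>X. (beta (mm x))^2) \<le> 20 * ?n * mu" by (simp add: mult_ac)
  have "(real (card {x\<in>X. D x = 0}))^2 * mu^2 \<le> ?n * (\<Sum>x\<in>X. (beta (mm x))^2) * mu^2"
    using s2 by (intro mult_right_mono) auto
  also have "\<dots> \<le> ?n * (20 * ?n * mu)" using s3 n_pos by (simp add: mult_ac mult_left_mono)
  finally have "(real (card {x\<in>X. D x = 0}))^2 * mu * mu \<le> (20 * ?n^2) * mu"
    by (simp add: power2_eq_square mult_ac)
  then have s4: "(real (card {x\<in>X. D x = 0}))^2 * mu \<le> 20 * ?n^2"
    using mu0 by (simp add: mult_le_cancel_right_pos)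
  have "(real (card {x\<in>X. D x = 0}))^2 * (real (card L) * real k / real N)
        \<le> (real (card {x\<in>X. D x = 0}))^2 * mu"
    using mu_ge unfolding mu_def by (intro mult_left_mono) auto
  then show ?thesis using s4 by linarith
qed

end



lemma choose_ge: "0 < k \<Longrightarrow> k < N \<Longrightarrow> N \<le> N choose k"
proof (induction N arbitrary: k)
  case 0 then show ?case by simp
next
  case (Suc n)
  show ?case
  proof (cases "k = 1")
    case True then show ?thesis by simp
  next
    case False
    then obtain j where j: "k = Suc j" "0 < j" using Suc.prems by (cases k) auto
    then have "n \<le> n choose j" using Suc.IH[of j] Suc.prems by simp
    moreover have "1 \<le> n choose k" using Suc.prems by (simp add: Suc_le_eq zero_less_binomial)
    ultimately show ?thesis using j by (simp add: binomial_Suc_Suc)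
  qed
qed

lemma eps_bound:
  assumes q: "q \<in> admissible_queries N l" and k1: "1 \<le> k" and kN: "2 * k < N" and l1: "1 \<le> l"
  shows "(real (card {x\<in>{x. x \<subseteq> {..<N} \<and> card x = k}. \<not> tilted N x q}))\<^sup>2 * (real l * real k / real N)
         \<le> 40 * (real (card {x. x \<subseteq> {..<N} \<and> card x = k}))\<^sup>2"
proof -
  obtain l' where qs: "query_string N l' q" and lq: "l \<le> card {i. q i \<noteq> 0}"
    using q unfolding admissible_queries_def by blast
  define L where "L = {i. q i = 1}"
  define R where "R = {i. q i = -1}"
  have vals: "\<forall>i. q i \<in> {-1,0,1}" and zero: "\<forall>i. N \<le> i \<longrightarrow> q i = 0"
    and cL: "card L = l'" and cR: "card R = l'"
    using qs unfolding query_string_def L_def R_def by auto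
  have LN: "L \<subseteq> {..<N}" unfolding L_def using zero by (auto simp: not_less[symmetric])
  have RN: "R \<subseteq> {..<N}" unfolding R_def using zero by (auto simp: not_less[symmetric])
  have LR: "L \<inter> R = {}" unfolding L_def R_def by auto
  have finL: "finite L" using LN finite_subset by blast
  have finR: "finite R" using RN finite_subset by blast
  have nz: "{i. q i \<noteq> 0} = L \<union> R" unfolding L_def R_def using vals by auto
  have l2: "l \<le> 2 * card L" using lq unfolding nz using card_Un_disjoint[OF finL finR LR] cL cR by simp
  have Lne: "L \<noteq> {}" using l2 l1 by auto
  obtain g where gb: "bij_betw g L R" using finite_same_card_bij[OF finL finR] cL cR by auto
  interpret P: pans N k L R g
    using LN RN LR gb k1 kN Lne by unfold_locales auto
  have til: "tilted N x q \<longleftrightarrow> P.D x \<noteq> 0" if x: "x \<subseteq> {..<N}" for x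
  proof -
    have "(\<Sum>i<N. q i * (if i \<in> x then 1 else 0)) = (\<Sum>i<N. of_bool (i \<in> x \<inter> L) - of_bool (i \<in> x \<inter> R) :: int)"
    proof (intro sum.cong refl)
      fix i
      have "q i = -1 \<or> q i = 0 \<or> q i = 1" using vals by auto
      then show "q i * (if i \<in> x then 1 else 0) = of_bool (i \<in> x \<inter> L) - of_bool (i \<in> x \<inter> R)"
        unfolding L_def R_def by auto
    qed
    also have "\<dots> = int (card ({..<N} \<inter> (x \<inter> L))) - int (card ({..<N} \<inter> (x \<inter> R)))"
      by (simp add: sum_subtractf Int_def)
    also have "{..<N} \<inter> (x \<inter> L) = x \<inter> L" using x by auto
    also have "{..<N} \<inter> (x \<inter> R) = x \<inter> R" using x by auto
    finally show ?thesis unfolding tilted_def P.D_def by simp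
  qed
  have seteq: "{x\<in>{x. x \<subseteq> {..<N} \<and> card x = k}. \<not> tilted N x q} = {x\<in>P.X. P.D x = 0}"
    unfolding P.X_def using til by auto
  have main: "(real (card {x\<in>P.X. P.D x = 0}))\<^sup>2 * (real (card L) * real k / real N) \<le> 20 * (real (card P.X))\<^sup>2"
    by (rule P.main_pans)
  have "real l * real k / real N \<le> 2 * (real (card L) * real k / real N)"
  proof -
    have "real l \<le> 2 * real (card L)" using l2 by simp
    then have "real l * real k \<le> 2 * real (card L) * real k" by (intro mult_right_mono) auto
    then show ?thesis by (simp add: divide_right_mono mult.assoc[symmetric])
  qed
  then have "(real (card {x\<in>P.X. P.D x = 0}))\<^sup>2 * (real l * real k / real N)
      \<le> (real (card {x\<in>P.X. P.D x = 0}))\<^sup>2 * (2 * (real (card L) * real k / real N))"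
    by (intro mult_left_mono) auto
  also have "\<dots> = 2 * ((real (card {x\<in>P.X. P.D x = 0}))\<^sup>2 * (real (card L) * real k / real N))"
    by (simp only: mult_ac)
  also have "\<dots> \<le> 2 * (20 * (real (card P.X))\<^sup>2)" by (rule mult_left_mono[OF main]) simp
  finally show ?thesis unfolding seteq P.X_def by simp
qed

lemma lb1:
  assumes k1: "1 \<le> k" and kN: "2 * k < N" and l1: "1 \<le> l" and idf: "identifies N k l m \<psi>0 U0 Us out"
  shows "real (length Us) \<ge> (sqrt (2/3) - sqrt (1/3)) / (2 * 40 powr (1/4)) * (real l * real k / real N) powr (1/4)"
proof -
  define X where "X = {x. x \<subseteq> {..<N} \<and> card x = k}"
  define r where "r = real l * real k / real N"
  have r0: "r > 0" unfolding r_def using k1 kN l1 by simp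
  define \<epsilon> where "\<epsilon> = sqrt (40 / r)"
  have e0: "0 \<le> \<epsilon>" unfolding \<epsilon>_def using r0 by simp
  have cX: "card X = N choose k" unfolding X_def using n_subsets[of "{..<N}" k] by simp
  have n3: "3 \<le> card X" unfolding cX using choose_ge[of k N] k1 kN by simp
  have bal: "\<forall>q\<in>admissible_queries N l. real (card {x\<in>X. \<not> tilted N x q}) \<le> \<epsilon> * real (card X)"
  proof
    fix q assume q: "q \<in> admissible_queries N l"
    have h: "(real (card {x\<in>X. \<not> tilted N x q}))\<^sup>2 * r \<le> 40 * (real (card X))\<^sup>2"
      using eps_bound[OF q k1 kN l1] unfolding X_def r_def .
    then have "(real (card {x\<in>X. \<not> tilted N x q}))\<^sup>2 \<le> 40 / r * (real (card X))\<^sup>2"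
      using r0 by (simp add: field_simps)
    then have "sqrt ((real (card {x\<in>X. \<not> tilted N x q}))\<^sup>2) \<le> sqrt (40 / r * (real (card X))\<^sup>2)"
      by (rule real_sqrt_le_mono)
    moreover have "sqrt (40 / r * (real (card X))\<^sup>2) = \<epsilon> * real (card X)"
      unfolding \<epsilon>_def real_sqrt_mult by simp
    ultimately show "real (card {x\<in>X. \<not> tilted N x q}) \<le> \<epsilon> * real (card X)"
      by simp
  qed
  have q: "sqrt (2/3) - sqrt (1/3) \<le> 2 * real (length Us) * sqrt \<epsilon>"
    by (rule quantum_lb[OF idf X_def n3 e0 bal])
  have se: "sqrt \<epsilon> = 40 powr (1/4) / r powr (1/4)"
  proof -
    have "sqrt \<epsilon> = ((40 / r) powr (1/2)) powr (1/2)"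
      unfolding \<epsilon>_def using r0 by (simp add: powr_half_sqrt)
    also have "\<dots> = (40 / r) powr (1/4)" by (simp add: powr_powr)
    also have "\<dots> = 40 powr (1/4) / r powr (1/4)" using r0 by (simp add: powr_divide)
    finally show ?thesis .
  qed
  have p40: "40 powr (1/4) > (0::real)" by simp
  have pr: "r powr (1/4) > 0" using r0 by simp
  have "(sqrt (2/3) - sqrt (1/3)) * r powr (1/4) \<le> 2 * real (length Us) * 40 powr (1/4)"
  proof -
    have "(sqrt (2/3) - sqrt (1/3)) * r powr (1/4) \<le> 2 * real (length Us) * sqrt \<epsilon> * r powr (1/4)"
      using q pr by (intro mult_right_mono) auto
    also have "\<dots> = 2 * real (length Us) * 40 powr (1/4)" unfolding se using pr by simp
    finally show ?thesis .
  qed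
  then show ?thesis unfolding r_def[symmetric] using p40
    by (simp add: field_simps)
qed

theorem theorem2:
  shows "(\<exists>C>0. \<forall>N k l m \<psi>0 U0 Us out.
            1 \<le> k \<and> 2 * k < N \<and> 1 \<le> l \<and> identifies N k l m \<psi>0 U0 Us out \<longrightarrow>
            real (length Us) \<ge> C * (real l * real k / real N) powr (1/4))
       \<and> (\<forall>c::real>0. \<exists>C>0. \<forall>N k l m \<psi>0 U0 Us out.
            1 \<le> k \<and> 2 * k < N \<and> 1 \<le> l \<and> real N \<le> c * real l \<and>
            identifies N k l m \<psi>0 U0 Us out \<longrightarrow>
            real (length Us) \<ge> C * real k powr (1/4))"
proof -
  define C0 where "C0 = (sqrt (2/3) - sqrt (1/3)) / (2 * 40 powr (1/4))"
  have "sqrt (1/3) < sqrt (2/3::real)" by simp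
  then have C0: "C0 > 0" unfolding C0_def by simp
  have P1: "\<forall>N k l m \<psi>0 U0 Us out.
            1 \<le> k \<and> 2 * k < N \<and> 1 \<le> l \<and> identifies N k l m \<psi>0 U0 Us out \<longrightarrow>
            real (length Us) \<ge> C0 * (real l * real k / real N) powr (1/4)"
    unfolding C0_def using lb1 by blast
  have P2: "\<exists>C>0. \<forall>N k l m \<psi>0 U0 Us out.
            1 \<le> k \<and> 2 * k < N \<and> 1 \<le> l \<and> real N \<le> c * real l \<and>
            identifies N k l m \<psi>0 U0 Us out \<longrightarrow>
            real (length Us) \<ge> C * real k powr (1/4)" if c: "c > 0" for c :: real
  proof (intro exI[of _ "C0 / c powr (1/4)"] conjI allI impI)
    show "C0 / c powr (1/4) > 0" using C0 c by simp
    fix N k l m \<psi>0 U0 Us out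
    assume a: "1 \<le> k \<and> 2 * k < N \<and> 1 \<le> l \<and> real N \<le> c * real l \<and> identifies N k l m \<psi>0 U0 Us out"
    then have h: "real (length Us) \<ge> C0 * (real l * real k / real N) powr (1/4)" using P1 by blast
    have Npos: "real N > 0" using a by simp
    have "real k / c \<le> real l * real k / real N"
    proof -
      have "real k * real N \<le> real k * (c * real l)" using a by (intro mult_left_mono) auto
      then show ?thesis using Npos c by (simp add: field_simps)
    qed
    then have "(real k / c) powr (1/4) \<le> (real l * real k / real N) powr (1/4)"
      using c by (intro powr_mono2) auto
    moreover have "(real k / c) powr (1/4) = real k powr (1/4) / c powr (1/4)"
      using c by (simp add: powr_divide)
    ultimately have "C0 * (real k powr (1/4) / c powr (1/4)) \<le> C0 * (real l * real k / real N) powr (1/4)"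
      using C0 by (intro mult_left_mono) auto
    then show "C0 / c powr (1/4) * real k powr (1/4) \<le> real (length Us)" using h by simp
  qed
  show ?thesis using C0 P1 P2 by blast
qed


end
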